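(* Let $f:\mathbb{Z}_+^E\to\mathbb{R}_{\ge0}$ be non-negative and DR-submodular, accessible through a value oracle, $|E|=n$, $k$ a positive integer and $\alpha\in(0,1)$ a constant. The output $\mathbf{z}$ of Algorithm FastDrSub$(f,E,k,\alpha)$ is feasible for the DrSMC problem and satisfies $$f(\mathbf{z})\ge\frac{1}{8\frac{2-\alpha}{1-\alpha}+\frac{1}{\alpha}}\,\mathsf{opt},$$ and the algorithm uses $O(n\log k)$ oracle queries. In particular, for $\alpha=\frac{2\sqrt2-1}{7}$ the ratio equals $\frac{1}{17+4\sqrt2}\approx0.044$.
   Context: Notation: $E$ is a finite ground set of size $n$; $\mathbf{1}_e$ is the $e$-th unit vector; $\mathbf{x}\le\mathbf{y}$ is coordinatewise; $\|\mathbf{x}\|_1=\sum_{e}\mathbf{x}(e)$; $f(\mathbf{a}\mid\mathbf{b}):=f(\mathbf{a}+\mathbf{b})-f(\mathbf{b})$. $f$ is DR-submodular if $f(\mathbf{x}+\mathbf{1}_e)-f(\mathbf{x})\ge f(\mathbf{y}+\mathbf{1}_e)-f(\mathbf{y})$ for all $\mathbf{x}\le\mathbf{y}$ and $e\in E$. A query is one evaluation of $f$. DrSMC problem: maximize $f(\mathbf{x})$ over $\mathbf{x}\in\mathbb{Z}_+^E$ subject to $\|\mathbf{x}\|_1\le k$ and $\mathbf{0}\le\mathbf{x}\le k\cdot\mathbf{1}$; $\mathsf{opt}$ denotes its optimal value. Algorithm FastDrSub$(f,E,k,\alpha)$ (elements of $E$ are processed in a fixed order): 1. Compute $(d_{\max},e_{\max})\in\arg\max\{f(d\mathbf{1}_e):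 e\in E,\ d\in\mathbb{Z},\ \alpha k<d\le k\}$. 2. Set $\mathbf{x}\leftarrow\mathbf{0}$, $\mathbf{y}\leftarrow\mathbf{0}$. 3. For each $e\in E$ in order: let $d_{(\mathbf{x},e)}=\max\{d\in\mathbb{Z}: 0<d\le\alpha k,\ f(\mathbf{1}_e\mid\mathbf{x}+(d-1)\mathbf{1}_e)\ge f(\mathbf{x})/k\}$ and $d_{(\mathbf{y},e)}=\max\{d\in\mathbb{Z}: 0<d\le\alpha k,\ f(\mathbf{1}_e\mid\mathbf{y}+(d-1)\mathbf{1}_e)\ge f(\mathbf{y})/k\}$ (each computed by binary search on $d$, and taken to be $0$ if the set is empty). If $f(d_{(\mathbf{x},e)}\mathbf{1}_e\mid\mathbf{x})\ge f(d_{(\mathbf{y},e)}\mathbf{1}_e\mid\mathbf{y})$, set $\mathbf{x}\leftarrow\mathbf{x}+d_{(\mathbf{x},e)}\mathbf{1}_e$; otherwise set $\mathbf{y}\leftarrow\mathbf{y}+d_{(\mathbf{y},e)}\mathbf{1}_e$. 4. (Trimming) Let $e_1,e_2,\dots$ be the elements of $\{e:\mathbf{x}(e)>0\}$ listed in reverse order of their addition to $\mathbf{x}$ (most recent first) and $\mathbf{x}_t=\sum_{i=1}^t\mathbf{x}(e_i)\mathbf{1}_{e_i}$; let $\mathbf{x}'=\mathbf{x}_t$ for the largest $t$ with $\|\mathbf{x}_t\|_1\le k$. Define $\mathbf{y}'$ from $\mathbf{y}$ in the same way. 5. Return $\mathbf{z}\in\arg\max\{f(\mathbf{t}):\mathbf{t}\in\{\mathbf{x}',\mathbf{y}',d_{\max}\mathbf{1}_{e_{\max}}\}\}$.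 *)

theory Defs
  imports Complex_Main
begin

text \<open>Vectors in Z_+^E are modelled as functions 'a => nat that vanish outside E.
  The oracle f is an arbitrary function on such vectors; every evaluation of f
  performed by the algorithm below is counted as one query.\<close>

type_synonym 'a ivec = "'a \<Rightarrow> nat"

definition supp_in :: "'a set \<Rightarrow> 'a ivec \<Rightarrow> bool" where
  "supp_in E x \<longleftrightarrow> (\<forall>e. e \<notin> E \<longrightarrow> x e = 0)"

definition vunit :: "'a \<Rightarrow> nat \<Rightarrow> 'a ivec" where
  "vunit e d = (\<lambda>e'. if e' = e then d else 0)"

definition vadd :: "'a ivec \<Rightarrow> 'a \<Rightarrow> nat \<Rightarrow> 'a ivec" where
  "vadd x e d = x(e := x e + d)"

definition dr_submodular :: "'a set \<Rightarrow> ('a ivec \<Rightarrow> real) \<Rightarrow> bool" where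
  "dr_submodular E f \<longleftrightarrow>
     (\<forall>x y e. supp_in E x \<longrightarrow> supp_in E y \<longrightarrow> x \<le> y \<longrightarrow> e \<in> E \<longrightarrow>
        f (vadd x e 1) - f x \<ge> f (vadd y e 1) - f y)"

definition nonneg_on :: "'a set \<Rightarrow> ('a ivec \<Rightarrow> real) \<Rightarrow> bool" where
  "nonneg_on E f \<longleftrightarrow> (\<forall>x. supp_in E x \<longrightarrow> f x \<ge> 0)"

definition drsmc_feasible :: "'a set \<Rightarrow> nat \<Rightarrow> 'a ivec \<Rightarrow> bool" where
  "drsmc_feasible E k x \<longleftrightarrow> supp_in E x \<and> (\<Sum>e\<in>E. x e) \<le> k \<and> (\<forall>e\<in>E. x e \<le> k)"

definition drsmc_opt :: "'a set \<Rightarrow> nat \<Rightarrow> ('a ivec \<Rightarrow> real) \<Rightarrow> real" where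
  "drsmc_opt E k f = Max (f ` {x. drsmc_feasible E k x})"

text \<open>Binary search: largest d in [lo,hi] satisfying the (monotone) test P, where lo is
  accepted without testing.  P d returns the test outcome and the number of oracle
  queries the test used.  Result: (d, number of queries).\<close>
function bsearch :: "(nat \<Rightarrow> bool \<times> nat) \<Rightarrow> nat \<Rightarrow> nat \<Rightarrow> nat \<times> nat" where
  "bsearch P lo hi =
     (if hi \<le> lo then (lo, 0)
      else if fst (P ((lo + hi + 1) div 2))
      then (fst (bsearch P ((lo + hi + 1) div 2) hi),
            snd (P ((lo + hi + 1) div 2)) + snd (bsearch P ((lo + hi + 1) div 2) hi))
      else (fst (bsearch P lo ((lo + hi + 1) div 2 - 1)),
            snd (P ((lo + hi + 1) div 2)) + snd (bsearch P lo ((lo + hi + 1) div 2 - 1))))"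
  by pat_completeness auto
termination by (relation "measure (\<lambda>(P, lo, hi). hi - lo)") auto

text \<open>Step 3: d_(x,e) = max {d : 0 < d <= alpha k, f(1_e | x + (d-1) 1_e) >= f(x)/k}, 0 if empty,
  computed by binary search (3 queries per test).\<close>
definition dsel :: "('a ivec \<Rightarrow> real) \<Rightarrow> nat \<Rightarrow> real \<Rightarrow> 'a ivec \<Rightarrow> 'a \<Rightarrow> nat \<times> nat" where
  "dsel f k \<alpha> x e =
     bsearch (\<lambda>d. (f (vadd x e d) - f (vadd x e (d - 1)) \<ge> f x / real k, 3))
             0 (nat \<lfloor>\<alpha> * real k\<rfloor>)"

text \<open>Step 1, for a fixed element e: maximise the concave (by DR-submodularity) function
  d |-> f(d 1_e) over alpha k < d <= k by binary search on the sign of its increments.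
  Result: (d, queries), including the final evaluation of f(d 1_e).\<close>
definition dsing :: "('a ivec \<Rightarrow> real) \<Rightarrow> nat \<Rightarrow> real \<Rightarrow> 'a \<Rightarrow> nat \<times> nat" where
  "dsing f k \<alpha> e =
     (let r = bsearch (\<lambda>d. (f (vunit e d) \<ge> f (vunit e (d - 1)), 2))
                      (nat \<lfloor>\<alpha> * real k\<rfloor> + 1) k
      in (fst r, snd r + 1))"

text \<open>Step 1: (e_max, d_max) and number of queries.  The comparisons reuse already
  queried values f(d_e 1_e).\<close>
definition step1 :: "('a ivec \<Rightarrow> real) \<Rightarrow> nat \<Rightarrow> real \<Rightarrow> 'a list \<Rightarrow> ('a \<times> nat) \<times> nat" where
  "step1 f k \<alpha> es =
     (let cands = map (\<lambda>e. (e, fst (dsing f k \<alpha> e))) es;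
          best = foldl (\<lambda>b c. if f (vunit (fst c) (snd c)) > f (vunit (fst b) (snd b)) then c else b)
                       (hd cands) (tl cands)
      in (best, sum_list (map (\<lambda>e. snd (dsing f k \<alpha> e)) es)))"

text \<open>Step 3 main loop.  State: (x, addition order of x, y, addition order of y, queries).\<close>
fun step3 :: "('a ivec \<Rightarrow> real) \<Rightarrow> nat \<Rightarrow> real \<Rightarrow> 'a list \<Rightarrow>
      'a ivec \<times> 'a list \<times> 'a ivec \<times> 'a list \<times> nat \<Rightarrow>
      'a ivec \<times> 'a list \<times> 'a ivec \<times> 'a list \<times> nat" where
  "step3 f k \<alpha> [] s = s"
| "step3 f k \<alpha> (e # es) (x, ox, y, oy, c) =
     (let rx = dsel f k \<alpha> x e; ry = dsel f k \<alpha> y e;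
          c' = c + snd rx + snd ry + 4
      in if f (vadd x e (fst rx)) - f x \<ge> f (vadd y e (fst ry)) - f y
         then step3 f k \<alpha> es (vadd x e (fst rx), ox @ [e], y, oy, c')
         else step3 f k \<alpha> es (x, ox, vadd y e (fst ry), oy @ [e], c'))"

definition trim :: "nat \<Rightarrow> 'a ivec \<Rightarrow> 'a list \<Rightarrow> 'a ivec" where
  "trim k x ord =
     (let R = rev (filter (\<lambda>e. 0 < x e) ord);
          t = (GREATEST t. t \<le> length R \<and> (\<Sum>e\<leftarrow>take t R. x e) \<le> k)
      in (\<lambda>e. if e \<in> set (take t R) then x e else 0))"

text \<open>FastDrSub(f, E, k, alpha) with E given as the processing order es.
  Returns (z, number of oracle queries).\<close>
definition fastdrsub :: "('a ivec \<Rightarrow> real) \<Rightarrow> 'a list \<Rightarrow> nat \<Rightarrow> real \<Rightarrow> 'a ivec \<times> nat" where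
  "fastdrsub f es k \<alpha> =
     (let s1 = step1 f k \<alpha> es;
          em = fst (fst s1); dm = snd (fst s1);
          s3 = step3 f k \<alpha> es (\<lambda>_. 0, [], \<lambda>_. 0, [], 0);
          x = fst s3; ox = fst (snd s3); y = fst (snd (snd s3));
          oy = fst (snd (snd (snd s3))); c3 = snd (snd (snd (snd s3)));
          x' = trim k x ox; y' = trim k y oy; m = vunit em dm;
          z = (if f x' \<ge> f y' \<and> f x' \<ge> f m then x' else if f y' \<ge> f m then y' else m)
      in (z, snd s1 + c3 + 3))"

end

theory Submission
  imports Defs
begin



declare bsearch.simps[simp del]

lemma vadd_0[simp]: "vadd x e 0 = x" by (simp add: vadd_def)
lemma vadd_vadd: "vadd (vadd x e a) e b = vadd x e (a+b)" by (simp add: vadd_def add.assoc)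
lemma vadd_app: "vadd x e d e' = (if e' = e then x e + d else x e')" by (simp add: vadd_def)
lemma vadd_mono: "x \<le> y \<Longrightarrow> vadd x e d \<le> vadd y e d"
  by (simp add: vadd_def le_fun_def)
lemma vadd_ge: "x \<le> vadd x e d" by (simp add: vadd_def le_fun_def)
lemma supp_vadd: "supp_in E x \<Longrightarrow> e \<in> E \<Longrightarrow> supp_in E (vadd x e d)"
  by (auto simp: supp_in_def vadd_def)
lemma supp_zero[simp]: "supp_in E (\<lambda>_. 0)" by (simp add: supp_in_def)
lemma vunit_eq: "vunit e d = vadd (\<lambda>_. 0) e d" by (auto simp: vunit_def vadd_def)

definition restr :: "'a ivec \<Rightarrow> 'a set \<Rightarrow> 'a ivec" where
  "restr x S = (\<lambda>e. if e \<in> S then x e else 0)"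

lemma chain_le:
  fixes g :: "nat \<Rightarrow> real"
  assumes "\<And>j. a < j \<Longrightarrow> j \<le> b \<Longrightarrow> g j - g (j-1) \<le> t" "a \<le> b"
  shows "g b - g a \<le> real (b - a) * t"
  using assms
proof (induction b)
  case 0 then show ?case by simp
next
  case (Suc b)
  show ?case
  proof (cases "a = Suc b")
    case True then show ?thesis by simp
  next
    case False
    then have ab: "a \<le> b" using Suc by simp
    have "g b - g a \<le> real (b - a) * t" using Suc ab by auto
    moreover have "g (Suc b) - g b \<le> t" using Suc.prems(1)[of "Suc b"] ab by simp
    ultimately show ?thesis using ab by (simp add: Suc_diff_le algebra_simps)
  qed
qed

lemma chain_ge:
  fixes g :: "nat \<Rightarrow> real"
  assumes "\<And>j. a < j \<Longrightarrow> j \<le> b \<Longrightarrow> t \<le> g j - g (j-1)" "a \<le> b"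
  shows "real (b - a) * t \<le> g b - g a"
proof -
  have "(\<lambda>j. - g j) b - (\<lambda>j. - g j) a \<le> real (b - a) * (- t)"
  proof (rule chain_le)
    fix j assume "a < j" "j \<le> b"
    then show "(\<lambda>j. - g j) j - (\<lambda>j. - g j) (j - 1) \<le> - t" using assms(1)[of j] by simp
  qed (rule assms(2))
  then show ?thesis by simp
qed

lemma chain_mono:
  fixes g :: "nat \<Rightarrow> real"
  assumes "\<And>j. a < j \<Longrightarrow> j \<le> b \<Longrightarrow> g (j-1) \<le> g j" "a \<le> b"
  shows "g a \<le> g b"
  using chain_ge[of a b 0 g] assms by force






lemma bsearch_spec:
  assumes "\<And>i j. lo < i \<Longrightarrow> i \<le> j \<Longrightarrow> j \<le> hi \<Longrightarrow> fst (P j) \<Longrightarrow> fst (P i)"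
  shows "lo \<le> fst (bsearch P lo hi) \<and> fst (bsearch P lo hi) \<le> max lo hi \<and>
         (\<forall>j. lo < j \<longrightarrow> j \<le> fst (bsearch P lo hi) \<longrightarrow> fst (P j)) \<and>
         (\<forall>j. fst (bsearch P lo hi) < j \<longrightarrow> j \<le> hi \<longrightarrow> \<not> fst (P j))"
  using assms
proof (induction P lo hi rule: bsearch.induct)
  case (1 P lo hi)
  define mid where "mid = (lo + hi + 1) div 2"
  show ?case
  proof (cases "hi \<le> lo")
    case True
    have "bsearch P lo hi = (lo, 0)" using True by (subst bsearch.simps) simp
    then show ?thesis using True by simp
  next
    case False
    then have mlo: "lo < mid" "mid \<le> hi" unfolding mid_def by auto
    show ?thesis
    proof (cases "fst (P mid)")
      case True
      have eq: "bsearch P lo hi = (fst (bsearch P mid hi), snd (P mid) + snd (bsearch P mid hi))"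
        using False True by (subst bsearch.simps) (simp add: mid_def)
      have IH: "mid \<le> fst (bsearch P mid hi) \<and> fst (bsearch P mid hi) \<le> max mid hi \<and>
         (\<forall>j. mid < j \<longrightarrow> j \<le> fst (bsearch P mid hi) \<longrightarrow> fst (P j)) \<and>
         (\<forall>j. fst (bsearch P mid hi) < j \<longrightarrow> j \<le> hi \<longrightarrow> \<not> fst (P j))"
        using "1.IH"(1)[OF False] True "1.prems" mlo unfolding mid_def[symmetric] by auto
      have A: "\<forall>j. lo < j \<longrightarrow> j \<le> mid \<longrightarrow> fst (P j)"
        using "1.prems"[of _ mid] True mlo by auto
      show ?thesis unfolding eq fst_conv
      proof (intro conjI allI impI)
        fix j assume "lo < j" "j \<le> fst (bsearch P mid hi)"
        then show "fst (P j)" using A IH by (cases "j \<le> mid") auto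
      qed (use IH mlo in auto)
    next
      case False2: False
      have eq: "bsearch P lo hi = (fst (bsearch P lo (mid - 1)), snd (P mid) + snd (bsearch P lo (mid - 1)))"
        using False False2 by (subst bsearch.simps) (simp add: mid_def)
      have IH: "lo \<le> fst (bsearch P lo (mid-1)) \<and> fst (bsearch P lo (mid-1)) \<le> max lo (mid-1) \<and>
         (\<forall>j. lo < j \<longrightarrow> j \<le> fst (bsearch P lo (mid-1)) \<longrightarrow> fst (P j)) \<and>
         (\<forall>j. fst (bsearch P lo (mid-1)) < j \<longrightarrow> j \<le> mid-1 \<longrightarrow> \<not> fst (P j))"
        using "1.IH"(3)[OF False] False2 "1.prems" mlo unfolding mid_def[symmetric] by auto
      have A: "\<forall>j. mid \<le> j \<longrightarrow> j \<le> hi \<longrightarrow> \<not> fst (P j)"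
        using "1.prems"[of mid] False2 mlo by auto
      show ?thesis unfolding eq fst_conv
      proof (intro conjI allI impI)
        fix j assume "fst (bsearch P lo (mid - 1)) < j" "j \<le> hi"
        then show "\<not> fst (P j)" using A IH by (cases "mid \<le> j") auto
      qed (use IH mlo in auto)
    qed
  qed
qed

lemma bsearch_count:
  shows "(\<And>d. snd (P d) = c) \<Longrightarrow> 1 \<le> N \<Longrightarrow> real (hi - lo) \<le> N \<Longrightarrow> real (snd (bsearch P lo hi)) \<le> real c * (1 + log 2 N)"
proof (induction P lo hi arbitrary: N rule: bsearch.induct)
  case (1 P lo hi)
  define mid where "mid = (lo + hi + 1) div 2"
  have logN: "0 \<le> log 2 N" using "1.prems" by simp
  show ?case
  proof (cases "hi \<le> lo")
    case True
    have "bsearch P lo hi = (lo, 0)" using True by (subst bsearch.simps) simp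
    then show ?thesis using logN by simp
  next
    case False
    have zero: "\<And>a b. b \<le> a \<Longrightarrow> snd (bsearch P a b) = 0" by (subst bsearch.simps) simp
    have rec: "real (snd (bsearch P a b)) \<le> real c * log 2 N" if ab: "2 * (b - a) \<le> hi - lo"
      and IH: "\<And>N'. 1 \<le> N' \<Longrightarrow> real (b - a) \<le> N' \<Longrightarrow> real (snd (bsearch P a b)) \<le> real c * (1 + log 2 N')" for a b
    proof (cases "b \<le> a")
      case True then show ?thesis using zero logN by simp
    next
      case False
      have "real (2 * (b - a)) \<le> real (hi - lo)" using ab by linarith
      then have h: "2 * real (b - a) \<le> N" using "1.prems"(3) by simp
      have "1 \<le> N / 2" "real (b - a) \<le> N / 2" using h False by auto
      from IH[OF this] have "real (snd (bsearch P a b)) \<le> real c * (1 + log 2 (N / 2))" .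
      also have "log 2 (N / 2) = log 2 N - 1" using "1.prems"(2) by (simp add: log_divide)
      finally show ?thesis by simp
    qed
    show ?thesis
    proof (cases "fst (P mid)")
      case True
      have eq: "bsearch P lo hi = (fst (bsearch P mid hi), snd (P mid) + snd (bsearch P mid hi))"
        using False True by (subst bsearch.simps) (simp add: mid_def)
      have "real (snd (bsearch P mid hi)) \<le> real c * log 2 N"
      proof (rule rec)
        show "2 * (hi - mid) \<le> hi - lo" unfolding mid_def by presburger
        fix N' assume "1 \<le> N'" "real (hi - mid) \<le> N'"
        then show "real (snd (bsearch P mid hi)) \<le> real c * (1 + log 2 N')"
          using "1.IH"(1)[OF False True[unfolded mid_def]] "1.prems"(1) unfolding mid_def by blast
      qed
      then show ?thesis unfolding eq using "1.prems"(1)[of mid] by (simp add: algebra_simps)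
    next
      case False2: False
      have eq: "bsearch P lo hi = (fst (bsearch P lo (mid - 1)), snd (P mid) + snd (bsearch P lo (mid - 1)))"
        using False False2 by (subst bsearch.simps) (simp add: mid_def)
      have "real (snd (bsearch P lo (mid - 1))) \<le> real c * log 2 N"
      proof (rule rec)
        show "2 * (mid - 1 - lo) \<le> hi - lo" unfolding mid_def by presburger
        fix N' assume "1 \<le> N'" "real (mid - 1 - lo) \<le> N'"
        then show "real (snd (bsearch P lo (mid - 1))) \<le> real c * (1 + log 2 N')"
          using "1.IH"(3)[OF False False2[unfolded mid_def]] "1.prems"(1) unfolding mid_def by blast
      qed
      then show ?thesis unfolding eq using "1.prems"(1)[of mid] by (simp add: algebra_simps)
    qed
  qed
qed




locale drs =
  fixes f :: "'a ivec \<Rightarrow> real" and E :: "'a set" and k :: nat and \<alpha> :: real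
  assumes finE: "finite E" and nn: "nonneg_on E f" and dr: "dr_submodular E f"
    and kpos: "0 < k" and apos: "0 < \<alpha>" and alt1: "\<alpha> < 1"
begin

definition hi :: nat where "hi = nat \<lfloor>\<alpha> * real k\<rfloor>"

lemma hi_le: "real hi \<le> \<alpha> * real k"
  using apos by (simp add: hi_def)
lemma hi_gt: "\<alpha> * real k < real hi + 1"
  using apos by (simp add: hi_def)
lemma hi_lt_k: "hi < k"
proof -
  have "real hi < real k" using hi_le alt1 kpos by (smt (verit) mult_less_cancel_right2 of_nat_0_less_iff)
  then show ?thesis by simp
qed

lemma fnn: "supp_in E x \<Longrightarrow> 0 \<le> f x" using nn by (simp add: nonneg_on_def)

lemma G1:
  assumes "supp_in E x" "supp_in E y" "x \<le> y" "e \<in> E"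
  shows "f (vadd y e d) - f y \<le> f (vadd x e d) - f x"
proof (induction d)
  case 0 then show ?case by simp
next
  case (Suc d)
  have "f (vadd (vadd y e d) e 1) - f (vadd y e d) \<le> f (vadd (vadd x e d) e 1) - f (vadd x e d)"
    using dr supp_vadd[OF assms(1,4)] supp_vadd[OF assms(2,4)] vadd_mono[OF assms(3)] assms(4) unfolding dr_submodular_def by blast
  then show ?case using Suc by (simp add: vadd_vadd)
qed

definition vplus :: "'b ivec \<Rightarrow> 'b ivec \<Rightarrow> 'b ivec" where "vplus x c = (\<lambda>e. x e + c e)"

lemma plus_split:
  "vplus x c = vadd (vplus x (c(a := 0))) a (c a)"
  by (auto simp: vadd_def vplus_def)

lemma supp_plus: "supp_in E x \<Longrightarrow> supp_in E c \<Longrightarrow> supp_in E (vplus x c)"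
  by (simp add: supp_in_def vplus_def)

lemma G_aux:
  assumes "finite A" "A \<subseteq> E"
  shows "\<forall>c x y. (\<forall>e. e \<notin> A \<longrightarrow> c e = 0) \<longrightarrow> supp_in E x \<longrightarrow> supp_in E y \<longrightarrow> x \<le> y \<longrightarrow>
     f (vplus y c) - f y \<le> f (vplus x c) - f x"
  using assms
proof (induction A rule: finite_induct)
  case empty
  then show ?case by (auto simp: vplus_def)
next
  case (insert a A)
  show ?case
  proof (intro allI impI)
    fix c x y :: "'a ivec"
    assume c: "\<forall>e. e \<notin> insert a A \<longrightarrow> c e = 0" and sx: "supp_in E x" and sy: "supp_in E y" and xy: "x \<le> y"
    let ?c = "c(a := 0)"
    have aE: "a \<in> E" using insert.prems by blast
    have c': "\<forall>e. e \<notin> A \<longrightarrow> ?c e = 0" using c by auto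
    have sc: "supp_in E ?c" using c' insert by (auto simp: supp_in_def)
    have IH: "f (vplus y ?c) - f y \<le> f (vplus x ?c) - f x" using insert.IH insert.prems c' sx sy xy by blast
    have "vplus x ?c \<le> vplus y ?c" using xy by (simp add: le_fun_def vplus_def)
    then have "f (vadd (vplus y ?c) a (c a)) - f (vplus y ?c) \<le> f (vadd (vplus x ?c) a (c a)) - f (vplus x ?c)"
      using G1[OF supp_plus[OF sx sc] supp_plus[OF sy sc] _ aE] by blast
    moreover have "f (vplus x c) = f (vadd (vplus x ?c) a (c a))" using plus_split[of x c a] by metis
    moreover have "f (vplus y c) = f (vadd (vplus y ?c) a (c a))" using plus_split[of y c a] by metis
    ultimately show "f (vplus y c) - f y \<le> f (vplus x c) - f x"
      using IH by linarith
  qed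
qed

lemma G:
  assumes "supp_in E c" "supp_in E x" "supp_in E y" "x \<le> y"
  shows "f (vplus y c) - f y \<le> f (vplus x c) - f x"
proof -
  have "\<forall>e. e \<notin> E \<longrightarrow> c e = 0" using assms(1) unfolding supp_in_def by blast
  then show ?thesis using G_aux[OF finE subset_refl] assms(2-4) by blast
qed

lemma SUB_aux:
  assumes "finite A" "A \<subseteq> E"
  shows "\<forall>c x. (\<forall>e. e \<notin> A \<longrightarrow> c e = 0) \<longrightarrow> supp_in E x \<longrightarrow>
     f (vplus x c) - f x \<le> (\<Sum>e\<in>A. f (vadd x e (c e)) - f x)"
  using assms
proof (induction A rule: finite_induct)
  case empty
  then show ?case by (auto simp: vplus_def)
next
  case (insert a A)
  show ?case
  proof (intro allI impI)
    fix c x :: "'a ivec"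
    assume c: "\<forall>e. e \<notin> insert a A \<longrightarrow> c e = 0" and sx: "supp_in E x"
    let ?c = "c(a := 0)"
    have aE: "a \<in> E" using insert.prems by blast
    have c': "\<forall>e. e \<notin> A \<longrightarrow> ?c e = 0" using c by auto
    have sc: "supp_in E ?c" using c' insert by (auto simp: supp_in_def)
    have IH: "f (vplus x ?c) - f x \<le> (\<Sum>e\<in>A. f (vadd x e (?c e)) - f x)" using insert.IH insert.prems c' sx by blast
    have s: "(\<Sum>e\<in>A. f (vadd x e (?c e)) - f x) = (\<Sum>e\<in>A. f (vadd x e (c e)) - f x)"
      using insert by (intro sum.cong) auto
    have "x \<le> vplus x ?c" by (simp add: le_fun_def vplus_def)
    then have "f (vadd (vplus x ?c) a (c a)) - f (vplus x ?c) \<le> f (vadd x a (c a)) - f x"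
      using G1[OF sx supp_plus[OF sx sc] _ aE] by blast
    moreover have "f (vplus x c) = f (vadd (vplus x ?c) a (c a))" using plus_split[of x c a] by metis
    moreover have "(\<Sum>e\<in>insert a A. f (vadd x e (c e)) - f x) = (f (vadd x a (c a)) - f x) + (\<Sum>e\<in>A. f (vadd x e (c e)) - f x)"
      using insert by (simp add: sum.insert)
    ultimately show "f (vplus x c) - f x \<le> (\<Sum>e\<in>insert a A. f (vadd x e (c e)) - f x)"
      using IH s by linarith
  qed
qed

lemma SUB:
  assumes "supp_in E c" "supp_in E x"
  shows "f (vplus x c) - f x \<le> (\<Sum>e\<in>E. f (vadd x e (c e)) - f x)"
proof -
  have "\<forall>e. e \<notin> E \<longrightarrow> c e = 0" using assms(1) unfolding supp_in_def by blast
  then show ?thesis using SUB_aux[OF finE subset_refl] assms(2) by blast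
qed

lemma lattice:
  assumes so: "supp_in E w" and sx: "supp_in E x" and sy: "supp_in E y" and dis: "\<forall>e. x e = 0 \<or> y e = 0"
  shows "f w + f (\<lambda>e. max (max (w e) (x e)) (y e)) \<le> f (\<lambda>e. max (w e) (x e)) + f (\<lambda>e. max (w e) (y e))"
proof -
  let ?c = "\<lambda>e. x e - w e"
  have sc: "supp_in E ?c" using sx by (simp add: supp_in_def)
  have soy: "supp_in E (\<lambda>e. max (w e) (y e))" using so sy by (simp add: supp_in_def)
  have le: "w \<le> (\<lambda>e. max (w e) (y e))" by (simp add: le_fun_def)
  have e1: "vplus w ?c = (\<lambda>e. max (w e) (x e))" by (auto simp: vplus_def)
  have e2: "vplus (\<lambda>e. max (w e) (y e)) ?c = (\<lambda>e. max (max (w e) (x e)) (y e))"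
  proof
    fix e show "(vplus (\<lambda>e. max (w e) (y e)) ?c) e = max (max (w e) (x e)) (y e)"
      using dis[rule_format, of e] by (auto simp: vplus_def)
  qed
  show ?thesis using G[OF sc so soy le] e1 e2 by simp
qed

definition inc :: "'a ivec \<Rightarrow> 'a \<Rightarrow> nat \<Rightarrow> real" where
  "inc v e j = f (vadd v e j) - f (vadd v e (j - 1))"

lemma incdec:
  assumes "supp_in E v" "e \<in> E" "0 < i" "i \<le> j"
  shows "inc v e j \<le> inc v e i"
proof -
  have le: "vadd v e (i - 1) \<le> vadd v e (j - 1)" using assms by (simp add: vadd_def le_fun_def)
  have "f (vadd (vadd v e (j-1)) e 1) - f (vadd v e (j-1)) \<le> f (vadd (vadd v e (i-1)) e 1) - f (vadd v e (i-1))"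
    using dr supp_vadd[OF assms(1,2)] le assms(2) unfolding dr_submodular_def by blast
  then show ?thesis using assms by (simp add: inc_def vadd_vadd)
qed

definition spec :: "'a ivec \<Rightarrow> 'a \<Rightarrow> nat \<Rightarrow> bool" where
  "spec v e d \<longleftrightarrow> d \<le> hi \<and> (\<forall>j. 0 < j \<longrightarrow> j \<le> d \<longrightarrow> f v / real k \<le> inc v e j)
      \<and> (\<forall>j. d < j \<longrightarrow> j \<le> hi \<longrightarrow> inc v e j < f v / real k)"

lemma dsel_spec:
  assumes "supp_in E v" "e \<in> E"
  shows "spec v e (fst (dsel f k \<alpha> v e))"
proof -
  let ?P = "\<lambda>d. (f (vadd v e d) - f (vadd v e (d - 1)) \<ge> f v / real k, 3::nat)"
  have "0 \<le> fst (bsearch ?P 0 hi) \<and> fst (bsearch ?P 0 hi) \<le> max 0 hi \<and>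
         (\<forall>j. 0 < j \<longrightarrow> j \<le> fst (bsearch ?P 0 hi) \<longrightarrow> fst (?P j)) \<and>
         (\<forall>j. fst (bsearch ?P 0 hi) < j \<longrightarrow> j \<le> hi \<longrightarrow> \<not> fst (?P j))"
  proof (rule bsearch_spec)
    fix i j assume "0 < i" "i \<le> j" "j \<le> hi" "fst (?P j)"
    then show "fst (?P i)" using incdec[OF assms, of i j] by (simp add: inc_def)
  qed
  then show ?thesis unfolding spec_def dsel_def hi_def[symmetric] by (auto simp: inc_def not_le)
qed

lemma spec_gain:
  assumes "spec v e d" "supp_in E v"
  shows "real d * (f v / real k) \<le> f (vadd v e d) - f v"
proof -
  have "real (d - 0) * (f v / real k) \<le> (\<lambda>j. f (vadd v e j)) d - (\<lambda>j. f (vadd v e j)) 0"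
    by (rule chain_ge) (use assms in \<open>auto simp: spec_def inc_def\<close>)
  then show ?thesis by simp
qed

lemma spec_gain0:
  assumes "spec v e d" "supp_in E v"
  shows "f v \<le> f (vadd v e d)"
proof -
  have "0 \<le> real d * (f v / real k)" using fnn[OF assms(2)] by simp
  then show ?thesis using spec_gain[OF assms] by simp
qed

end



context drs begin

lemma pe_hit:
  assumes sv: "supp_in E v" and svt: "supp_in E vt" and eE: "e \<in> E"
    and le: "vadd vt e d \<le> v" and sp: "spec vt e d" and fle: "f vt \<le> f v" and od: "od \<le> hi"
  shows "f (vadd v e (od - d)) - f v \<le> real od * (f v / real k)"
proof -
  let ?r = "od - d"
  have sv': "supp_in E (vadd vt e d)" using supp_vadd[OF svt eE] .
  have "f (vadd v e ?r) - f v \<le> f (vadd (vadd vt e d) e ?r) - f (vadd vt e d)"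
    using G1[OF sv' sv le eE] .
  also have "\<dots> = (\<lambda>j. f (vadd vt e j)) (d + ?r) - (\<lambda>j. f (vadd vt e j)) d"
    by (simp add: vadd_vadd)
  also have "\<dots> \<le> real (d + ?r - d) * (f vt / real k)"
  proof (rule chain_le)
    fix j assume "d < j" "j \<le> d + ?r"
    moreover have "d \<le> hi" using sp by (simp add: spec_def)
    ultimately have "j \<le> hi" using od by linarith
    then show "f (vadd vt e j) - f (vadd vt e (j - 1)) \<le> f vt / real k"
      using sp \<open>d < j\<close> by (auto simp: spec_def inc_def intro: less_imp_le)
  qed simp
  also have "\<dots> \<le> real od * (f v / real k)"
  proof (rule mult_mono)
    show "real (d + ?r - d) \<le> real od" by simp
    show "f vt / real k \<le> f v / real k" using fle kpos by (simp add: divide_right_mono)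
    show "0 \<le> f vt / real k" using fnn[OF svt] by simp
  qed simp
  finally show ?thesis .
qed

lemma pe_miss:
  assumes sv: "supp_in E v" and svt: "supp_in E vt" and eE: "e \<in> E"
    and le: "vt \<le> v" and sp: "spec vt e d" and fle: "f vt \<le> f v" and od: "od \<le> hi"
  shows "f (vadd v e od) - f v \<le> real od * (f v / real k) + (f (vadd vt e d) - f vt)"
proof -
  have 1: "f (vadd v e od) - f v \<le> f (vadd vt e od) - f vt"
    using G1[OF svt sv le eE] .
  have thr: "0 \<le> f vt / real k" using fnn[OF svt] by simp
  have thr2: "f vt / real k \<le> f v / real k" using fle kpos by (simp add: divide_right_mono)
  show ?thesis
  proof (cases "od \<le> d")
    case True
    have "(\<lambda>j. f (vadd vt e j)) od \<le> (\<lambda>j. f (vadd vt e j)) d"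
    proof (rule chain_mono)
      fix j assume "od < j" "j \<le> d"
      then have "f vt / real k \<le> inc vt e j" using sp by (simp add: spec_def)
      then show "f (vadd vt e (j - 1)) \<le> f (vadd vt e j)" using thr by (simp add: inc_def)
    qed (rule True)
    moreover have "0 \<le> real od * (f v / real k)" using thr thr2 by (intro mult_nonneg_nonneg) auto
    ultimately show ?thesis using 1 by simp
  next
    case False
    have "(\<lambda>j. f (vadd vt e j)) od - (\<lambda>j. f (vadd vt e j)) d \<le> real (od - d) * (f vt / real k)"
    proof (rule chain_le)
      fix j assume "d < j" "j \<le> od"
      then show "f (vadd vt e j) - f (vadd vt e (j - 1)) \<le> f vt / real k"
        using sp od by (auto simp: spec_def inc_def intro: less_imp_le)
    qed (use False in simp)
    also have "\<dots> \<le> real od * (f v / real k)"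
      by (rule mult_mono) (use thr thr2 in auto)
    finally show ?thesis using 1 by simp
  qed
qed

definition good :: "'a \<Rightarrow> 'a ivec \<Rightarrow> 'a ivec \<Rightarrow> bool \<Rightarrow> real \<Rightarrow> real \<Rightarrow> bool" where
  "good e x y b gx gy \<longleftrightarrow> (\<exists>xt yt dx dy. supp_in E xt \<and> supp_in E yt \<and>
     vadd xt e (x e) \<le> x \<and> vadd yt e (y e) \<le> y \<and> f xt \<le> f x \<and> f yt \<le> f y \<and>
     spec xt e dx \<and> spec yt e dy \<and> gx = f (vadd xt e dx) - f xt \<and> gy = f (vadd yt e dy) - f yt \<and>
     (if b then x e = dx \<and> y e = 0 \<and> gy \<le> gx else x e = 0 \<and> y e = dy \<and> gx < gy))"

lemma pe_x:
  assumes g: "good e x y b gx gy" and sx: "supp_in E x" and eE: "e \<in> E" and od: "od \<le> hi"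
  shows "f (vadd x e (od - x e)) - f x \<le> real od * (f x / real k) + (if b then 0 else gx)"
proof -
  obtain xt yt dx dy where h: "supp_in E xt" "vadd xt e (x e) \<le> x" "f xt \<le> f x" "spec xt e dx"
     "gx = f (vadd xt e dx) - f xt"
     "if b then x e = dx \<and> y e = 0 \<and> gy \<le> gx else x e = 0 \<and> y e = dy \<and> gx < gy"
    using g unfolding good_def by blast
  show ?thesis
  proof (cases b)
    case True
    then have "x e = dx" using h(6) by simp
    then show ?thesis using pe_hit[OF sx h(1) eE _ h(4) h(3) od] h(2) True by simp
  next
    case False
    then have "x e = 0" using h(6) by simp
    then show ?thesis using pe_miss[OF sx h(1) eE _ h(4) h(3) od] h(2) h(5) False by simp
  qed
qed

lemma pe_y:
  assumes g: "good e x y b gx gy" and sy: "supp_in E y" and eE: "e \<in> E" and od: "od \<le> hi"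
  shows "f (vadd y e (od - y e)) - f y \<le> real od * (f y / real k) + (if b then gy else 0)"
proof -
  obtain xt yt dx dy where h: "supp_in E yt" "vadd yt e (y e) \<le> y" "f yt \<le> f y" "spec yt e dy"
     "gy = f (vadd yt e dy) - f yt"
     "if b then x e = dx \<and> y e = 0 \<and> gy \<le> gx else x e = 0 \<and> y e = dy \<and> gx < gy"
    using g unfolding good_def by blast
  show ?thesis
  proof (cases b)
    case False
    then have "y e = dy" using h(6) by simp
    then show ?thesis using pe_hit[OF sy h(1) eE _ h(4) h(3) od] h(2) False by simp
  next
    case True
    then have "y e = 0" using h(6) by simp
    then show ?thesis using pe_miss[OF sy h(1) eE _ h(4) h(3) od] h(2) h(5) True by simp
  qed
qed

lemma good_mono:
  assumes g: "good e x y b gx gy" and "x \<le> x2" "x2 e = x e" "f x \<le> f x2" "y \<le> y2" "y2 e = y e" "f y \<le> f y2"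
  shows "good e x2 y2 b gx gy"
proof -
  obtain xt yt dx dy where h: "supp_in E xt" "supp_in E yt" "vadd xt e (x e) \<le> x" "vadd yt e (y e) \<le> y"
     "f xt \<le> f x" "f yt \<le> f y" "spec xt e dx" "spec yt e dy"
     "gx = f (vadd xt e dx) - f xt" "gy = f (vadd yt e dy) - f yt"
     "if b then x e = dx \<and> y e = 0 \<and> gy \<le> gx else x e = 0 \<and> y e = dy \<and> gx < gy"
    using g unfolding good_def by blast
  show ?thesis unfolding good_def
    apply (rule exI[of _ xt], rule exI[of _ yt], rule exI[of _ dx], rule exI[of _ dy])
    using h assms(2-7) order_trans by (auto simp del: vadd_0)
qed

end



context drs begin

definition pfx :: "'a ivec \<Rightarrow> 'a list \<Rightarrow> bool" where
  "pfx x L \<longleftrightarrow> (\<forall>A b C. L = A @ b # C \<longrightarrow>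
     real (x b) * (f (restr x (set A)) / real k) \<le> f (restr x (insert b (set A))) - f (restr x (set A)))"

lemma restr_agree: "(\<And>e. e \<in> S \<Longrightarrow> x2 e = x e) \<Longrightarrow> restr x2 S = restr x S"
  by (auto simp: restr_def)

lemma restr_all: "(\<And>e. e \<notin> S \<Longrightarrow> x e = 0) \<Longrightarrow> restr x S = x"
  by (auto simp: restr_def)

lemma pfx_snoc:
  assumes p: "pfx x L" and eL: "e \<notin> set L" and pos: "\<forall>e'. 0 < x e' \<longrightarrow> e' \<in> set L"
    and gain: "real d * (f x / real k) \<le> f (vadd x e d) - f x"
  shows "pfx (vadd x e d) (L @ [e])"
  unfolding pfx_def
proof (intro allI impI)
  fix A b C assume eq: "L @ [e] = A @ b # C"
  let ?x2 = "vadd x e d"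
  have xe: "x e = 0" using pos eL by auto
  show "real (?x2 b) * (f (restr ?x2 (set A)) / real k) \<le> f (restr ?x2 (insert b (set A))) - f (restr ?x2 (set A))"
  proof (cases C rule: rev_cases)
    case Nil
    then have AL: "A = L" and be: "b = e" using eq by auto
    have r1: "restr ?x2 (set A) = x"
    proof
      fix e' show "restr ?x2 (set A) e' = x e'"
        using pos[rule_format, of e'] eL unfolding AL by (cases "e' \<in> set L") (auto simp: restr_def vadd_def)
    qed
    have r2: "restr ?x2 (insert b (set A)) = ?x2"
    proof
      fix e' show "restr ?x2 (insert b (set A)) e' = ?x2 e'"
        using pos[rule_format, of e'] eL unfolding AL be by (cases "e' \<in> set L") (auto simp: restr_def vadd_def)
    qed
    show ?thesis unfolding r1 r2 using gain xe be by (simp add: vadd_def)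
  next
    case (snoc C' c)
    then have L: "L = A @ b # C'" using eq by auto
    have eA: "e \<notin> set A" "b \<noteq> e" using eL L by auto
    have r1: "restr ?x2 (set A) = restr x (set A)"
      by (rule restr_agree) (use eA in \<open>auto simp: vadd_def\<close>)
    have r2: "restr ?x2 (insert b (set A)) = restr x (insert b (set A))"
      by (rule restr_agree) (use eA in \<open>auto simp: vadd_def\<close>)
    have "?x2 b = x b" using eA by (simp add: vadd_def)
    then show ?thesis unfolding r1 r2 using p L unfolding pfx_def by auto
  qed
qed

definition inv :: "'a set \<Rightarrow> 'a ivec \<Rightarrow> 'a list \<Rightarrow> 'a ivec \<Rightarrow> 'a list \<Rightarrow> bool" where
  "inv D x ox y oy \<longleftrightarrow> supp_in E x \<and> supp_in E y \<and> (\<forall>e. e \<notin> D \<longrightarrow> x e = 0 \<and> y e = 0) \<and>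
     (\<forall>e. x e \<le> hi \<and> y e \<le> hi) \<and>
     distinct ox \<and> set ox \<subseteq> D \<and> (\<forall>e. 0 < x e \<longrightarrow> e \<in> set ox) \<and> pfx x (filter (\<lambda>e. 0 < x e) ox) \<and>
     distinct oy \<and> set oy \<subseteq> D \<and> (\<forall>e. 0 < y e \<longrightarrow> e \<in> set oy) \<and> pfx y (filter (\<lambda>e. 0 < y e) oy) \<and>
     (\<exists>B gX gY. (\<forall>e\<in>D. good e x y (B e) (gX e) (gY e)) \<and>
        (\<Sum>e\<in>{e\<in>D. B e}. gX e) \<le> f x - f (\<lambda>_. 0) \<and> (\<Sum>e\<in>{e\<in>D. \<not> B e}. gY e) \<le> f y - f (\<lambda>_. 0))"

lemma filter_step:
  assumes "e \<notin> set ox" "x e = 0"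
  shows "filter (\<lambda>e'. 0 < vadd x e d e') (ox @ [e]) = filter (\<lambda>e'. 0 < x e') ox @ (if 0 < d then [e] else [])"
proof -
  have "filter (\<lambda>e'. 0 < vadd x e d e') ox = filter (\<lambda>e'. 0 < x e') ox"
    using assms(1) by (intro filter_cong) (auto simp: vadd_def)
  then show ?thesis using assms by (simp add: vadd_def)
qed

lemma pfx_step:
  assumes p: "pfx x (filter (\<lambda>e. 0 < x e) ox)" and eo: "e \<notin> set ox" and xe: "x e = 0"
    and pos: "\<forall>e'. 0 < x e' \<longrightarrow> e' \<in> set ox"
    and gain: "real d * (f x / real k) \<le> f (vadd x e d) - f x"
  shows "pfx (vadd x e d) (filter (\<lambda>e'. 0 < vadd x e d e') (ox @ [e]))"
proof (cases "d = 0")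
  case True
  then show ?thesis using filter_step[of e ox x 0, OF eo xe] p by simp
next
  case False
  have "pfx (vadd x e d) (filter (\<lambda>e. 0 < x e) ox @ [e])"
    by (rule pfx_snoc[OF p]) (use eo pos gain in auto)
  then show ?thesis using filter_step[of e ox x d, OF eo xe] False by simp
qed

lemma inv_stepX:
  assumes I: "inv D x ox y oy" and fD: "finite D" and eE: "e \<in> E" and eD: "e \<notin> D"
    and spx: "spec x e dx" and spy: "spec y e dy"
    and br: "f (vadd y e dy) - f y \<le> f (vadd x e dx) - f x"
  shows "inv (insert e D) (vadd x e dx) (ox @ [e]) y oy"
proof -
  let ?x2 = "vadd x e dx"
  let ?gx = "f (vadd x e dx) - f x" and ?gy = "f (vadd y e dy) - f y"
  from I have sx: "supp_in E x" and sy: "supp_in E y" and z: "\<forall>e. e \<notin> D \<longrightarrow> x e = 0 \<and> y e = 0"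
    and bd: "\<forall>e. x e \<le> hi \<and> y e \<le> hi" and dox: "distinct ox" and sox: "set ox \<subseteq> D"
    and posx: "\<forall>e. 0 < x e \<longrightarrow> e \<in> set ox" and px: "pfx x (filter (\<lambda>e. 0 < x e) ox)"
    and rest: "distinct oy \<and> set oy \<subseteq> D \<and> (\<forall>e. 0 < y e \<longrightarrow> e \<in> set oy) \<and> pfx y (filter (\<lambda>e. 0 < y e) oy)"
    and ex: "\<exists>B gX gY. (\<forall>e\<in>D. good e x y (B e) (gX e) (gY e)) \<and>
        (\<Sum>e\<in>{e\<in>D. B e}. gX e) \<le> f x - f (\<lambda>_. 0) \<and> (\<Sum>e\<in>{e\<in>D. \<not> B e}. gY e) \<le> f y - f (\<lambda>_. 0)"
    unfolding inv_def by blast+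
  obtain B gX gY where gd: "\<forall>e\<in>D. good e x y (B e) (gX e) (gY e)"
    and s1: "(\<Sum>e\<in>{e\<in>D. B e}. gX e) \<le> f x - f (\<lambda>_. 0)" and s2: "(\<Sum>e\<in>{e\<in>D. \<not> B e}. gY e) \<le> f y - f (\<lambda>_. 0)"
    using ex by blast
  have xe: "x e = 0" and ye: "y e = 0" using z eD by auto
  have eo: "e \<notin> set ox" using sox eD by auto
  have dxh: "dx \<le> hi" using spx by (simp add: spec_def)
  have fx2: "f x \<le> f ?x2" using spec_gain0[OF spx sx] .
  have sx2: "supp_in E ?x2" using supp_vadd[OF sx eE] .
  have P1: "\<forall>e'. e' \<notin> insert e D \<longrightarrow> ?x2 e' = 0 \<and> y e' = 0" using z by (auto simp: vadd_def)
  have P2: "\<forall>e'. ?x2 e' \<le> hi \<and> y e' \<le> hi" using bd xe dxh by (auto simp: vadd_def)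
  have P3: "distinct (ox @ [e])" "set (ox @ [e]) \<subseteq> insert e D" using dox eo sox by auto
  have P4: "\<forall>e'. 0 < ?x2 e' \<longrightarrow> e' \<in> set (ox @ [e])" using posx by (auto simp: vadd_def)
  have P5: "pfx ?x2 (filter (\<lambda>e'. 0 < ?x2 e') (ox @ [e]))"
    by (rule pfx_step[OF px eo xe posx spec_gain[OF spx sx]])
  define B' where "B' = B(e := True)"
  define gX' where "gX' = gX(e := ?gx)"
  define gY' where "gY' = gY(e := ?gy)"
  have G: "\<forall>e'\<in>insert e D. good e' ?x2 y (B' e') (gX' e') (gY' e')"
  proof
    fix e' assume e': "e' \<in> insert e D"
    show "good e' ?x2 y (B' e') (gX' e') (gY' e')"
    proof (cases "e' = e")
      case True
      show ?thesis unfolding True B'_def gX'_def gY'_def good_def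
        apply (rule exI[of _ x], rule exI[of _ y], rule exI[of _ dx], rule exI[of _ dy])
        using sx sy fx2 spx spy br xe ye by (simp add: vadd_def fun_upd_idem)
    next
      case False
      then have "e' \<in> D" using e' by auto
      then have "good e' x y (B e') (gX e') (gY e')" using gd by auto
      then have "good e' ?x2 y (B e') (gX e') (gY e')"
        by (rule good_mono) (use False fx2 vadd_ge[of x e dx] in \<open>auto simp: vadd_def\<close>)
      then show ?thesis using False by (simp add: B'_def gX'_def gY'_def)
    qed
  qed
  have e1: "{e'\<in>insert e D. B' e'} = insert e {e'\<in>D. B e'}" by (auto simp: B'_def)
  have e2: "{e'\<in>insert e D. \<not> B' e'} = {e'\<in>D. \<not> B e'}" using eD by (auto simp: B'_def)
  have "(\<Sum>e'\<in>{e'\<in>insert e D. B' e'}. gX' e') = ?gx + (\<Sum>e'\<in>{e'\<in>D. B e'}. gX' e')"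
    unfolding e1 using fD eD by (simp add: gX'_def)
  also have "(\<Sum>e'\<in>{e'\<in>D. B e'}. gX' e') = (\<Sum>e'\<in>{e'\<in>D. B e'}. gX e')"
    using eD by (intro sum.cong) (auto simp: gX'_def)
  finally have S1: "(\<Sum>e'\<in>{e'\<in>insert e D. B' e'}. gX' e') \<le> f ?x2 - f (\<lambda>_. 0)" using s1 by simp
  have "(\<Sum>e'\<in>{e'\<in>insert e D. \<not> B' e'}. gY' e') = (\<Sum>e'\<in>{e'\<in>D. \<not> B e'}. gY e')"
    unfolding e2 using eD by (intro sum.cong) (auto simp: gY'_def)
  then have S2: "(\<Sum>e'\<in>{e'\<in>insert e D. \<not> B' e'}. gY' e') \<le> f y - f (\<lambda>_. 0)" using s2 by simp
  have R: "distinct oy \<and> set oy \<subseteq> insert e D \<and> (\<forall>e. 0 < y e \<longrightarrow> e \<in> set oy) \<and> pfx y (filter (\<lambda>e. 0 < y e) oy)"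
    using rest by auto
  show ?thesis unfolding inv_def
    using sx2 sy P1 P2 P3 P4 P5 R G S1 S2 by blast
qed

lemma inv_stepY:
  assumes I: "inv D x ox y oy" and fD: "finite D" and eE: "e \<in> E" and eD: "e \<notin> D"
    and spx: "spec x e dx" and spy: "spec y e dy"
    and br: "f (vadd x e dx) - f x < f (vadd y e dy) - f y"
  shows "inv (insert e D) x ox (vadd y e dy) (oy @ [e])"
proof -
  let ?y2 = "vadd y e dy"
  let ?gx = "f (vadd x e dx) - f x" and ?gy = "f (vadd y e dy) - f y"
  from I have sx: "supp_in E x" and sy: "supp_in E y" and z: "\<forall>e. e \<notin> D \<longrightarrow> x e = 0 \<and> y e = 0"
    and bd: "\<forall>e. x e \<le> hi \<and> y e \<le> hi" and doy: "distinct oy" and soy: "set oy \<subseteq> D"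
    and posy: "\<forall>e. 0 < y e \<longrightarrow> e \<in> set oy" and py: "pfx y (filter (\<lambda>e. 0 < y e) oy)"
    and rest: "distinct ox \<and> set ox \<subseteq> D \<and> (\<forall>e. 0 < x e \<longrightarrow> e \<in> set ox) \<and> pfx x (filter (\<lambda>e. 0 < x e) ox)"
    and ex: "\<exists>B gX gY. (\<forall>e\<in>D. good e x y (B e) (gX e) (gY e)) \<and>
        (\<Sum>e\<in>{e\<in>D. B e}. gX e) \<le> f x - f (\<lambda>_. 0) \<and> (\<Sum>e\<in>{e\<in>D. \<not> B e}. gY e) \<le> f y - f (\<lambda>_. 0)"
    unfolding inv_def by blast+
  obtain B gX gY where gd: "\<forall>e\<in>D. good e x y (B e) (gX e) (gY e)"
    and s1: "(\<Sum>e\<in>{e\<in>D. B e}. gX e) \<le> f x - f (\<lambda>_. 0)" and s2: "(\<Sum>e\<in>{e\<in>D. \<not> B e}. gY e) \<le> f y - f (\<lambda>_. 0)"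
    using ex by blast
  have xe: "x e = 0" and ye: "y e = 0" using z eD by auto
  have eo: "e \<notin> set oy" using soy eD by auto
  have dyh: "dy \<le> hi" using spy by (simp add: spec_def)
  have fy2: "f y \<le> f ?y2" using spec_gain0[OF spy sy] .
  have sy2: "supp_in E ?y2" using supp_vadd[OF sy eE] .
  have P1: "\<forall>e'. e' \<notin> insert e D \<longrightarrow> x e' = 0 \<and> ?y2 e' = 0" using z by (auto simp: vadd_def)
  have P2: "\<forall>e'. x e' \<le> hi \<and> ?y2 e' \<le> hi" using bd ye dyh by (auto simp: vadd_def)
  have P3: "distinct (oy @ [e])" "set (oy @ [e]) \<subseteq> insert e D" using doy eo soy by auto
  have P4: "\<forall>e'. 0 < ?y2 e' \<longrightarrow> e' \<in> set (oy @ [e])" using posy by (auto simp: vadd_def)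
  have P5: "pfx ?y2 (filter (\<lambda>e'. 0 < ?y2 e') (oy @ [e]))"
    by (rule pfx_step[OF py eo ye posy spec_gain[OF spy sy]])
  define B' where "B' = B(e := False)"
  define gX' where "gX' = gX(e := ?gx)"
  define gY' where "gY' = gY(e := ?gy)"
  have G: "\<forall>e'\<in>insert e D. good e' x ?y2 (B' e') (gX' e') (gY' e')"
  proof
    fix e' assume e': "e' \<in> insert e D"
    show "good e' x ?y2 (B' e') (gX' e') (gY' e')"
    proof (cases "e' = e")
      case True
      show ?thesis unfolding True B'_def gX'_def gY'_def good_def
        apply (rule exI[of _ x], rule exI[of _ y], rule exI[of _ dx], rule exI[of _ dy])
        using sx sy fy2 spx spy br xe ye by (simp add: vadd_def fun_upd_idem)
    next
      case False
      then have "e' \<in> D" using e' by auto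
      then have "good e' x y (B e') (gX e') (gY e')" using gd by auto
      then have "good e' x ?y2 (B e') (gX e') (gY e')"
        by (rule good_mono) (use False fy2 vadd_ge[of y e dy] in \<open>auto simp: vadd_def\<close>)
      then show ?thesis using False by (simp add: B'_def gX'_def gY'_def)
    qed
  qed
  have e1: "{e'\<in>insert e D. \<not> B' e'} = insert e {e'\<in>D. \<not> B e'}" by (auto simp: B'_def)
  have e2: "{e'\<in>insert e D. B' e'} = {e'\<in>D. B e'}" using eD by (auto simp: B'_def)
  have "(\<Sum>e'\<in>{e'\<in>insert e D. \<not> B' e'}. gY' e') = ?gy + (\<Sum>e'\<in>{e'\<in>D. \<not> B e'}. gY' e')"
    unfolding e1 using fD eD by (simp add: gY'_def)
  also have "(\<Sum>e'\<in>{e'\<in>D. \<not> B e'}. gY' e') = (\<Sum>e'\<in>{e'\<in>D. \<not> B e'}. gY e')"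
    using eD by (intro sum.cong) (auto simp: gY'_def)
  finally have S2: "(\<Sum>e'\<in>{e'\<in>insert e D. \<not> B' e'}. gY' e') \<le> f ?y2 - f (\<lambda>_. 0)" using s2 by simp
  have "(\<Sum>e'\<in>{e'\<in>insert e D. B' e'}. gX' e') = (\<Sum>e'\<in>{e'\<in>D. B e'}. gX e')"
    unfolding e2 using eD by (intro sum.cong) (auto simp: gX'_def)
  then have S1: "(\<Sum>e'\<in>{e'\<in>insert e D. B' e'}. gX' e') \<le> f x - f (\<lambda>_. 0)" using s1 by simp
  have R: "distinct ox \<and> set ox \<subseteq> insert e D \<and> (\<forall>e. 0 < x e \<longrightarrow> e \<in> set ox) \<and> pfx x (filter (\<lambda>e. 0 < x e) ox)"
    using rest by auto
  show ?thesis unfolding inv_def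
    using sx sy2 P1 P2 P3 P4 P5 R G S1 S2 by blast
qed

lemma inv_init: "inv {} (\<lambda>_. 0) [] (\<lambda>_. 0) []"
  unfolding inv_def pfx_def by auto

lemma step3_inv:
  "inv D x ox y oy \<Longrightarrow> finite D \<Longrightarrow> set rest \<subseteq> E \<Longrightarrow> distinct rest \<Longrightarrow> set rest \<inter> D = {} \<Longrightarrow>
   step3 f k \<alpha> rest (x, ox, y, oy, c) = (x', ox', y', oy', c') \<Longrightarrow> inv (D \<union> set rest) x' ox' y' oy'"
proof (induction rest arbitrary: D x ox y oy c)
  case Nil
  then show ?case by simp
next
  case (Cons e rest)
  let ?dx = "fst (dsel f k \<alpha> x e)" and ?dy = "fst (dsel f k \<alpha> y e)"
  let ?c = "c + snd (dsel f k \<alpha> x e) + snd (dsel f k \<alpha> y e) + 4"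
  have eE: "e \<in> E" and eD: "e \<notin> D" using Cons.prems by auto
  have sx: "supp_in E x" and sy: "supp_in E y" using Cons.prems(1) unfolding inv_def by auto
  have spx: "spec x e ?dx" and spy: "spec y e ?dy" using dsel_spec sx sy eE by auto
  have fin: "finite (insert e D)" using Cons.prems(2) by simp
  have pr: "set rest \<subseteq> E" "distinct rest" "set rest \<inter> insert e D = {}" using Cons.prems by auto
  have U: "insert e D \<union> set rest = D \<union> set (e # rest)" by auto
  show ?case
  proof (cases "f (vadd y e ?dy) - f y \<le> f (vadd x e ?dx) - f x")
    case True
    have st: "step3 f k \<alpha> rest (vadd x e ?dx, ox @ [e], y, oy, ?c) = (x', ox', y', oy', c')"
      using Cons.prems(6) True by (simp add: Let_def)
    show ?thesis using Cons.IH[OF inv_stepX[OF Cons.prems(1,2) eE eD spx spy True] fin pr st] U by simp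
  next
    case False
    then have F: "f (vadd x e ?dx) - f x < f (vadd y e ?dy) - f y" by simp
    have st: "step3 f k \<alpha> rest (x, ox, vadd y e ?dy, oy @ [e], ?c) = (x', ox', y', oy', c')"
      using Cons.prems(6) False by (simp add: Let_def)
    show ?thesis using Cons.IH[OF inv_stepY[OF Cons.prems(1,2) eE eD spx spy F] fin pr st] U by simp
  qed
qed

end



context drs begin

lemma supp_restr: "supp_in E x \<Longrightarrow> supp_in E (restr x S)"
  by (simp add: supp_in_def restr_def)

lemma restr_insert: "b \<notin> S \<Longrightarrow> restr x (insert b S) = vadd (restr x S) b (x b)"
  by (auto simp: restr_def vadd_def)

lemma restr_mono: "S \<subseteq> T \<Longrightarrow> restr x S \<le> restr x T"
  by (auto simp: restr_def le_fun_def)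

lemma restr_empty: "restr x {} = (\<lambda>_. 0)"
  by (simp add: restr_def)

lemma chainA:
  assumes sx: "supp_in E x" and dL: "distinct L" and LE: "set L \<subseteq> E"
  shows "L = A @ B @ C \<Longrightarrow> f (restr x (set (A @ B))) - f (restr x (set A)) \<le> f (restr x (set B)) - f (\<lambda>_. 0)"
proof (induction B arbitrary: C rule: rev_induct)
  case Nil
  then show ?case by (simp add: restr_empty)
next
  case (snoc b B)
  have L: "L = A @ B @ (b # C)" using snoc.prems by simp
  have IH: "f (restr x (set (A @ B))) - f (restr x (set A)) \<le> f (restr x (set B)) - f (\<lambda>_. 0)"
    using snoc.IH[OF L] .
  have bn: "b \<notin> set A \<union> set B" using dL L by auto
  have bE: "b \<in> E" using LE L by auto
  have e1: "restr x (set (A @ B @ [b])) = vadd (restr x (set (A @ B))) b (x b)"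
    using restr_insert[of b "set (A @ B)" x] bn by (simp add: insert_commute)
  have e2: "restr x (set (B @ [b])) = vadd (restr x (set B)) b (x b)"
    using restr_insert[of b "set B" x] bn by simp
  have le: "restr x (set B) \<le> restr x (set (A @ B))" by (rule restr_mono) auto
  have "f (vadd (restr x (set (A @ B))) b (x b)) - f (restr x (set (A @ B))) \<le>
        f (vadd (restr x (set B)) b (x b)) - f (restr x (set B))"
    by (rule G1[OF supp_restr[OF sx] supp_restr[OF sx] le bE])
  then show ?case using IH e1 e2 by simp
qed

lemma chainB:
  assumes sx: "supp_in E x" and p: "pfx x L"
  shows "L = A @ B @ C \<Longrightarrow> real (sum_list (map x B)) * (f (restr x (set A)) / real k)
      \<le> f (restr x (set (A @ B))) - f (restr x (set A))"
proof (induction B arbitrary: C rule: rev_induct)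
  case Nil
  then show ?case by simp
next
  case (snoc b B)
  have L: "L = (A @ B) @ b # C" using snoc.prems by simp
  have IH: "real (sum_list (map x B)) * (f (restr x (set A)) / real k) \<le> f (restr x (set (A @ B))) - f (restr x (set A))"
    using snoc.IH[of "b # C"] snoc.prems by simp
  have a0: "0 \<le> f (restr x (set A)) / real k" using fnn[OF supp_restr[OF sx]] by simp
  have "0 \<le> real (sum_list (map x B)) * (f (restr x (set A)) / real k)" using a0 by (intro mult_nonneg_nonneg) auto
  then have aAB: "f (restr x (set A)) / real k \<le> f (restr x (set (A @ B))) / real k"
    using IH kpos by (simp add: divide_right_mono)
  have P: "real (x b) * (f (restr x (set (A @ B))) / real k) \<le>
      f (restr x (insert b (set (A @ B)))) - f (restr x (set (A @ B)))"
    using p L unfolding pfx_def by blast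
  have "real (x b) * (f (restr x (set A)) / real k) \<le> real (x b) * (f (restr x (set (A @ B))) / real k)"
    using aAB by (intro mult_left_mono) auto
  then show ?case using IH P by (simp add: algebra_simps insert_commute)
qed

lemma trim_good:
  assumes sx: "supp_in E x" and dox: "distinct ox" and oE: "set ox \<subseteq> E"
    and pos: "\<forall>e. 0 < x e \<longrightarrow> e \<in> set ox" and bd: "\<forall>e. x e \<le> hi"
    and p: "pfx x (filter (\<lambda>e. 0 < x e) ox)"
  shows "supp_in E (trim k x ox) \<and> (\<Sum>e\<in>E. trim k x ox e) \<le> k \<and> (\<forall>e\<in>E. trim k x ox e \<le> k)
     \<and> (1 - \<alpha>) * f x \<le> (2 - \<alpha>) * f (trim k x ox)"
proof -
  define L where "L = filter (\<lambda>e. 0 < x e) ox"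
  define R where "R = rev L"
  define P where "P = (\<lambda>t. t \<le> length R \<and> (\<Sum>e\<leftarrow>take t R. x e) \<le> k)"
  define t where "t = (GREATEST t. P t)"
  have dL: "distinct L" and LE: "set L \<subseteq> E" using dox oE by (auto simp: L_def)
  have posL: "\<And>e. e \<notin> set L \<Longrightarrow> x e = 0" using pos by (auto simp: L_def)
  have pL: "pfx x L" using p by (simp add: L_def)
  have P0: "P 0" by (simp add: P_def)
  have Pb: "\<And>y. P y \<Longrightarrow> y \<le> length R" by (simp add: P_def)
  have Pt: "P t" unfolding t_def by (rule GreatestI_nat[of P 0 "length R", OF P0 Pb])
  have tmax: "\<And>y. P y \<Longrightarrow> y \<le> t" unfolding t_def by (rule Greatest_le_nat[of P _ "length R", OF _ Pb])
  have tr: "trim k x ox = restr x (set (take t R))"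
    unfolding trim_def Let_def R_def[unfolded L_def] t_def[unfolded P_def R_def L_def] restr_def ..
  define s where "s = length L - t"
  define A where "A = take s L"
  define B where "B = drop s L"
  have tR: "take t R = rev B" unfolding R_def B_def s_def by (simp add: take_rev)
  have LAB: "L = A @ B @ []" by (simp add: A_def B_def)
  have setB: "set (take t R) = set B" using tR by simp
  have trB: "trim k x ox = restr x (set B)" using tr setB by simp
  have sumB: "(\<Sum>e\<leftarrow>take t R. x e) = sum_list (map x B)" using tR by (simp add: rev_map[symmetric] sum_list_rev)
  have BE: "set B \<subseteq> E" using LE by (auto simp: B_def dest: in_set_dropD)
  have dB: "distinct B" using dL by (simp add: B_def)
  have supp: "supp_in E (trim k x ox)" using trB supp_restr[OF sx] by simp
  have "(\<Sum>e\<in>E. trim k x ox e) = (\<Sum>e\<in>E \<inter> set B. x e)"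
    unfolding trB restr_def using finE by (simp add: sum.inter_restrict)
  also have "E \<inter> set B = set B" using BE by auto
  also have "(\<Sum>e\<in>set B. x e) = sum_list (map x B)" using dB by (simp add: sum_list_distinct_conv_sum_set)
  finally have feas: "(\<Sum>e\<in>E. trim k x ox e) \<le> k" using Pt sumB by (simp add: P_def)
  have ent: "\<forall>e\<in>E. trim k x ox e \<le> k"
  proof
    fix e assume "e \<in> E"
    have "restr x (set B) e \<le> x e" by (simp add: restr_def)
    also have "x e \<le> hi" using bd by blast
    also have "hi \<le> k" using hi_lt_k by simp
    finally show "trim k x ox e \<le> k" using trB by simp
  qed
  have xL: "restr x (set L) = x" using posL by (rule restr_all)
  have fx0: "0 \<le> f x" using fnn[OF sx] .
  have ratio: "(1 - \<alpha>) * f x \<le> (2 - \<alpha>) * f (trim k x ox)"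
  proof (cases "t < length R")
    case False
    then have "t = length R" using Pt by (simp add: P_def)
    then have "s = 0" by (simp add: s_def R_def)
    then have "trim k x ox = x" using trB xL by (simp add: B_def)
    then show ?thesis using fx0 by (simp add: mult_right_mono)
  next
    case True
    have "\<not> P (Suc t)" using tmax[of "Suc t"] by auto
    then have gt: "k < (\<Sum>e\<leftarrow>take (Suc t) R. x e)" using True by (simp add: P_def)
    have "take (Suc t) R = take t R @ [R ! t]" using True by (simp add: take_Suc_conv_app_nth)
    then have "k < sum_list (map x B) + x (R ! t)" using gt sumB by simp
    then have "k < sum_list (map x B) + hi" using bd[rule_format, of "R ! t"] by linarith
    then have "real k < real (sum_list (map x B)) + real hi" by linarith
    then have sB: "(1 - \<alpha>) * real k \<le> real (sum_list (map x B))" using hi_le by (simp add: algebra_simps)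
    define a where "a = f (restr x (set A))"
    have a0: "0 \<le> a" unfolding a_def using fnn[OF supp_restr[OF sx]] .
    have FA: "f (restr x (set (A @ B))) = f x" using LAB xL by simp
    have cA: "f x - a \<le> f (trim k x ox) - f (\<lambda>_. 0)"
      using chainA[OF sx dL LE LAB] FA trB by (simp add: a_def)
    have cB: "real (sum_list (map x B)) * (a / real k) \<le> f x - a"
      using chainB[OF sx pL LAB] FA by (simp add: a_def)
    have "(1 - \<alpha>) * real k * (a / real k) \<le> real (sum_list (map x B)) * (a / real k)"
      using sB a0 kpos by (intro mult_right_mono) auto
    then have "(1 - \<alpha>) * a \<le> f x - a" using cB kpos by simp
    moreover have "0 \<le> f (\<lambda>_. 0)" using fnn by simp
    ultimately have h1: "(1 - \<alpha>) * a \<le> f (trim k x ox)" and h2: "f x - a \<le> f (trim k x ox)" using cA by linarith+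
    have "(1 - \<alpha>) * (f x - a) \<le> (1 - \<alpha>) * f (trim k x ox)" using h2 alt1 by (intro mult_left_mono) auto
    then show ?thesis using h1 by (simp add: algebra_simps)
  qed
  show ?thesis using supp feas ent ratio by blast
qed

end



context drs begin

lemma good_branch:
  assumes "good e x y b gx gy"
  shows "(b \<longrightarrow> gy \<le> gx \<and> y e = 0) \<and> (\<not> b \<longrightarrow> gx < gy \<and> x e = 0)"
  using assms unfolding good_def by (cases b) auto

lemma bound_o:
  assumes I: "inv E x ox y oy" and fw: "drsmc_feasible E k w"
    and tx: "(1 - \<alpha>) * f x \<le> (2 - \<alpha>) * f z" and ty: "(1 - \<alpha>) * f y \<le> (2 - \<alpha>) * f z"
    and big: "\<forall>e\<in>E. hi < w e \<longrightarrow> f (vunit e (w e)) \<le> f z" and fz0: "0 \<le> f z"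
  shows "f w \<le> (6 * ((2 - \<alpha>) / (1 - \<alpha>)) + 1 / \<alpha>) * f z"
proof -
  have sx: "supp_in E x" and sy: "supp_in E y" using I unfolding inv_def by auto
  obtain B gX gY where gd: "\<forall>e\<in>E. good e x y (B e) (gX e) (gY e)"
    and s1: "(\<Sum>e\<in>{e\<in>E. B e}. gX e) \<le> f x - f (\<lambda>_. 0)" and s2: "(\<Sum>e\<in>{e\<in>E. \<not> B e}. gY e) \<le> f y - f (\<lambda>_. 0)"
    using I unfolding inv_def by blast
  have sw: "supp_in E w" and sumw: "(\<Sum>e\<in>E. w e) \<le> k" using fw by (auto simp: drsmc_feasible_def)
  define wS where "wS = (\<lambda>e. if w e \<le> hi then w e else 0)"
  define wL where "wL = (\<lambda>e. if w e \<le> hi then 0 else w e)"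
  have swS: "supp_in E wS" and swL: "supp_in E wL" using sw by (auto simp: supp_in_def wS_def wL_def)
  have wSL: "vplus wS wL = w" by (auto simp: vplus_def wS_def wL_def)
  have zL: "vplus (\<lambda>_. 0) wL = wL" by (simp add: vplus_def)
  have f00: "0 \<le> f (\<lambda>_. 0)" using fnn by simp
  have fx0: "0 \<le> f x" and fy0: "0 \<le> f y" using fnn sx sy by auto
  have a: "f w - f wS \<le> f wL - f (\<lambda>_. 0)"
    using G[OF swL supp_zero swS] wSL zL by (simp add: le_fun_def)
  have b: "f wL - f (\<lambda>_. 0) \<le> (\<Sum>e\<in>E. f (vadd (\<lambda>_. 0) e (wL e)) - f (\<lambda>_. 0))"
    using SUB[OF swL supp_zero] zL by simp
  have "(\<Sum>e\<in>E. f (vadd (\<lambda>_. 0) e (wL e)) - f (\<lambda>_. 0)) \<le> (\<Sum>e\<in>E. if hi < w e then f z else 0)"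
  proof (rule sum_mono)
    fix e assume eE: "e \<in> E"
    show "f (vadd (\<lambda>_. 0) e (wL e)) - f (\<lambda>_. 0) \<le> (if hi < w e then f z else 0)"
    proof (cases "hi < w e")
      case True
      then have "vadd (\<lambda>_. 0) e (wL e) = vunit e (w e)" by (simp add: wL_def vunit_eq)
      then show ?thesis using True big eE f00 by auto
    next
      case False
      then show ?thesis by (simp add: wL_def)
    qed
  qed
  also have "(\<Sum>e\<in>E. if hi < w e then f z else 0) = real (card {e\<in>E. hi < w e}) * f z"
    using finE by (simp add: sum.inter_filter[symmetric])
  finally have c: "f wL - f (\<lambda>_. 0) \<le> real (card {e\<in>E. hi < w e}) * f z" using b by linarith
  have "card {e\<in>E. hi < w e} * (hi + 1) = (\<Sum>e\<in>{e\<in>E. hi < w e}. hi + 1)" by simp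
  also have "\<dots> \<le> (\<Sum>e\<in>{e\<in>E. hi < w e}. w e)" by (rule sum_mono) auto
  also have "\<dots> \<le> (\<Sum>e\<in>E. w e)" using finE by (intro sum_mono2) auto
  finally have "card {e\<in>E. hi < w e} * (hi + 1) \<le> k" using sumw by linarith
  then have "real (card {e\<in>E. hi < w e} * (hi + 1)) \<le> real k"
    by (simp only: of_nat_le_iff)
  then have "real (card {e\<in>E. hi < w e}) * (real hi + 1) \<le> real k"
    by (simp add: algebra_simps)
  moreover have "real (card {e\<in>E. hi < w e}) * (\<alpha> * real k) \<le> real (card {e\<in>E. hi < w e}) * (real hi + 1)"
    using hi_gt by (intro mult_left_mono) auto
  ultimately have "real (card {e\<in>E. hi < w e}) * \<alpha> * real k \<le> 1 * real k" by (simp add: algebra_simps)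
  then have "real (card {e\<in>E. hi < w e}) * \<alpha> \<le> 1" using kpos by (simp only: mult_le_cancel_right)
  then have cardb: "real (card {e\<in>E. hi < w e}) \<le> 1 / \<alpha>" using apos by (simp add: field_simps)
  have cm: "real (card {e\<in>E. hi < w e}) * f z \<le> 1 / \<alpha> * f z" by (rule mult_right_mono[OF cardb fz0])
  have L: "f w - f wS \<le> 1 / \<alpha> * f z" using order_trans[OF order_trans[OF a c] cm] .
  have dis: "\<forall>e. x e = 0 \<or> y e = 0"
  proof
    fix e show "x e = 0 \<or> y e = 0"
    proof (cases "e \<in> E")
      case True
      then have "good e x y (B e) (gX e) (gY e)" using gd by blast
      from good_branch[OF this] show ?thesis by (cases "B e") auto
    next
      case False then show ?thesis using sx sy by (simp add: supp_in_def)
    qed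
  qed
  have lat: "f wS + f (\<lambda>e. max (max (wS e) (x e)) (y e)) \<le> f (\<lambda>e. max (wS e) (x e)) + f (\<lambda>e. max (wS e) (y e))"
    by (rule lattice[OF swS sx sy dis])
  have m0: "0 \<le> f (\<lambda>e. max (max (wS e) (x e)) (y e))"
    using fnn swS sx sy by (auto simp: supp_in_def)
  have sumS: "(\<Sum>e\<in>E. wS e) \<le> k" using sumw order_trans[OF sum_mono[of E wS w]] by (force simp: wS_def)
  have wSh: "\<And>e. wS e \<le> hi" by (simp add: wS_def)
  have sumS': "real (\<Sum>e\<in>E. wS e) * (f x / real k) \<le> f x" "real (\<Sum>e\<in>E. wS e) * (f y / real k) \<le> f y"
  proof -
    have r: "real (\<Sum>e\<in>E. wS e) \<le> real k" using sumS by linarith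
    show "real (\<Sum>e\<in>E. wS e) * (f x / real k) \<le> f x"
      using mult_right_mono[OF r, of "f x / real k"] fx0 kpos by simp
    show "real (\<Sum>e\<in>E. wS e) * (f y / real k) \<le> f y"
      using mult_right_mono[OF r, of "f y / real k"] fy0 kpos by simp
  qed
  have X: "f (\<lambda>e. max (wS e) (x e)) \<le> 2 * f x + f y - f (\<lambda>_. 0)"
  proof -
    let ?c = "\<lambda>e. wS e - x e"
    have sc: "supp_in E ?c" using swS by (simp add: supp_in_def)
    have eq: "vplus x ?c = (\<lambda>e. max (wS e) (x e))" by (auto simp: vplus_def)
    have "f (vplus x ?c) - f x \<le> (\<Sum>e\<in>E. f (vadd x e (?c e)) - f x)" by (rule SUB[OF sc sx])
    also have "\<dots> \<le> (\<Sum>e\<in>E. real (wS e) * (f x / real k) + (if B e then 0 else gX e))"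
      by (rule sum_mono) (use pe_x gd sx wSh in blast)
    also have "\<dots> = (\<Sum>e\<in>E. real (wS e) * (f x / real k)) + (\<Sum>e\<in>E. if \<not> B e then gX e else 0)"
      by (subst sum.distrib[symmetric]) (rule sum.cong, auto)
    also have "\<dots> = real (\<Sum>e\<in>E. wS e) * (f x / real k) + (\<Sum>e\<in>{e\<in>E. \<not> B e}. gX e)"
      using finE by (simp add: sum_distrib_right sum.inter_filter sum_divide_distrib)
    finally have c1: "f (vplus x ?c) - f x \<le> real (\<Sum>e\<in>E. wS e) * (f x / real k) + (\<Sum>e\<in>{e\<in>E. \<not> B e}. gX e)" .
    have c2: "(\<Sum>e\<in>{e\<in>E. \<not> B e}. gX e) \<le> (\<Sum>e\<in>{e\<in>E. \<not> B e}. gY e)"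
      by (rule sum_mono) (use good_branch gd in \<open>force\<close>)
    have c3: "f (\<lambda>e. max (wS e) (x e)) = f (vplus x ?c)" using eq by simp
    show ?thesis using c1 c2 c3 sumS'(1) s2 by linarith
  qed
  have Y: "f (\<lambda>e. max (wS e) (y e)) \<le> 2 * f y + f x - f (\<lambda>_. 0)"
  proof -
    let ?c = "\<lambda>e. wS e - y e"
    have sc: "supp_in E ?c" using swS by (simp add: supp_in_def)
    have eq: "vplus y ?c = (\<lambda>e. max (wS e) (y e))" by (auto simp: vplus_def)
    have "f (vplus y ?c) - f y \<le> (\<Sum>e\<in>E. f (vadd y e (?c e)) - f y)" by (rule SUB[OF sc sy])
    also have "\<dots> \<le> (\<Sum>e\<in>E. real (wS e) * (f y / real k) + (if B e then gY e else 0))"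
      by (rule sum_mono) (use pe_y gd sy wSh in blast)
    also have "\<dots> = (\<Sum>e\<in>E. real (wS e) * (f y / real k)) + (\<Sum>e\<in>E. if B e then gY e else 0)"
      by (subst sum.distrib[symmetric]) (rule sum.cong, auto)
    also have "\<dots> = real (\<Sum>e\<in>E. wS e) * (f y / real k) + (\<Sum>e\<in>{e\<in>E. B e}. gY e)"
      using finE by (simp add: sum_distrib_right sum.inter_filter sum_divide_distrib)
    finally have c1: "f (vplus y ?c) - f y \<le> real (\<Sum>e\<in>E. wS e) * (f y / real k) + (\<Sum>e\<in>{e\<in>E. B e}. gY e)" .
    have c2: "(\<Sum>e\<in>{e\<in>E. B e}. gY e) \<le> (\<Sum>e\<in>{e\<in>E. B e}. gX e)"
      by (rule sum_mono) (use good_branch gd in \<open>force\<close>)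
    have c3: "f (\<lambda>e. max (wS e) (y e)) = f (vplus y ?c)" using eq by simp
    show ?thesis using c1 c2 c3 sumS'(2) s1 by linarith
  qed
  have S: "f wS \<le> 3 * f x + 3 * f y" using lat m0 X Y f00 by linarith
  have am: "0 < 1 - \<alpha>" using alt1 by simp
  have fxr: "f x \<le> (2 - \<alpha>) / (1 - \<alpha>) * f z" using tx am by (simp add: field_simps)
  have fyr: "f y \<le> (2 - \<alpha>) / (1 - \<alpha>) * f z" using ty am by (simp add: field_simps)
  have eqf: "(6 * ((2 - \<alpha>) / (1 - \<alpha>)) + 1 / \<alpha>) * f z = 6 * ((2 - \<alpha>) / (1 - \<alpha>) * f z) + 1 / \<alpha> * f z"
    by (simp add: algebra_simps)
  show ?thesis unfolding eqf using S L fxr fyr by linarith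
qed

end



lemma foldl_best:
  fixes F :: "'b \<Rightarrow> real"
  shows "foldl (\<lambda>b c. if F c > F b then c else b) b cs \<in> set (b # cs) \<and>
   (\<forall>c\<in>set (b # cs). F c \<le> F (foldl (\<lambda>b c. if F c > F b then c else b) b cs))"
proof (induction cs arbitrary: b)
  case Nil then show ?case by simp
next
  case (Cons c cs)
  let ?g = "\<lambda>b c. if F c > F b then c else b"
  have "foldl ?g b (c # cs) = foldl ?g (?g b c) cs" by simp
  moreover have "?g b c \<in> {b, c}" "F b \<le> F (?g b c)" "F c \<le> F (?g b c)" by auto
  ultimately show ?case using Cons[of "?g b c"] by (auto intro: order_trans)
qed

context drs begin

lemma dsing_spec:
  assumes eE: "e \<in> E"
  shows "hi < fst (dsing f k \<alpha> e) \<and> fst (dsing f k \<alpha> e) \<le> k \<and>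
     (\<forall>d. hi < d \<longrightarrow> d \<le> k \<longrightarrow> f (vunit e d) \<le> f (vunit e (fst (dsing f k \<alpha> e))))"
proof -
  let ?P = "\<lambda>d. (f (vunit e d) \<ge> f (vunit e (d - 1)), 2::nat)"
  have fd: "fst (dsing f k \<alpha> e) = fst (bsearch ?P (hi + 1) k)" by (simp add: dsing_def Let_def hi_def)
  have bs: "hi + 1 \<le> fst (bsearch ?P (hi + 1) k) \<and> fst (bsearch ?P (hi + 1) k) \<le> max (hi + 1) k \<and>
         (\<forall>j. hi + 1 < j \<longrightarrow> j \<le> fst (bsearch ?P (hi + 1) k) \<longrightarrow> fst (?P j)) \<and>
         (\<forall>j. fst (bsearch ?P (hi + 1) k) < j \<longrightarrow> j \<le> k \<longrightarrow> \<not> fst (?P j))"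
  proof (rule bsearch_spec)
    fix i j assume "hi + 1 < i" "i \<le> j" "j \<le> k" "fst (?P j)"
    moreover have "inc (\<lambda>_. 0) e j \<le> inc (\<lambda>_. 0) e i" using incdec[OF supp_zero eE, of i j] \<open>hi + 1 < i\<close> \<open>i \<le> j\<close> by simp
    ultimately show "fst (?P i)" by (simp add: inc_def vunit_eq)
  qed
  define r where "r = fst (bsearch ?P (hi + 1) k)"
  have rk: "hi < r" "r \<le> k" using bs hi_lt_k by (auto simp: r_def)
  have up: "\<And>j. hi + 1 < j \<Longrightarrow> j \<le> r \<Longrightarrow> f (vunit e (j - 1)) \<le> f (vunit e j)" using bs by (auto simp: r_def)
  have dn: "\<And>j. r < j \<Longrightarrow> j \<le> k \<Longrightarrow> f (vunit e j) < f (vunit e (j - 1))" using bs by (auto simp: r_def not_le)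
  have "\<forall>d. hi < d \<longrightarrow> d \<le> k \<longrightarrow> f (vunit e d) \<le> f (vunit e r)"
  proof (intro allI impI)
    fix d assume d: "hi < d" "d \<le> k"
    show "f (vunit e d) \<le> f (vunit e r)"
    proof (cases "d \<le> r")
      case True
      show ?thesis
        by (rule chain_mono[of d r "\<lambda>j. f (vunit e j)", simplified]) (use up d True in auto)
    next
      case False
      have "(\<lambda>j. - f (vunit e j)) r \<le> (\<lambda>j. - f (vunit e j)) d"
      proof (rule chain_mono)
        fix j assume "r < j" "j \<le> d"
        then show "- f (vunit e (j - 1)) \<le> - f (vunit e j)" using dn[of j] d by auto
      qed (use False in auto)
      then show ?thesis by simp
    qed
  qed
  then show ?thesis using rk fd r_def by simp
qed

lemma step1_spec:
  assumes esE: "set es = E" and ne: "es \<noteq> []"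
  shows "fst (fst (step1 f k \<alpha> es)) \<in> E \<and> snd (fst (step1 f k \<alpha> es)) \<le> k \<and>
    (\<forall>e\<in>E. \<forall>d. hi < d \<longrightarrow> d \<le> k \<longrightarrow> f (vunit e d) \<le> f (vunit (fst (fst (step1 f k \<alpha> es))) (snd (fst (step1 f k \<alpha> es)))))"
proof -
  define cands where "cands = map (\<lambda>e. (e, fst (dsing f k \<alpha> e))) es"
  define F where "F = (\<lambda>c. f (vunit (fst c) (snd c)))"
  define best where "best = foldl (\<lambda>b c. if F c > F b then c else b) (hd cands) (tl cands)"
  have fb: "fst (step1 f k \<alpha> es) = best"
    unfolding step1_def Let_def best_def cands_def F_def by simp
  have cn: "hd cands # tl cands = cands" using ne by (simp add: cands_def)
  have fl: "best \<in> set cands \<and> (\<forall>c\<in>set cands. F c \<le> F best)"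
    using foldl_best[of F "hd cands" "tl cands"] unfolding best_def cn by simp
  then obtain em where em: "em \<in> E" "best = (em, fst (dsing f k \<alpha> em))"
    using esE by (auto simp: cands_def)
  have dk: "snd best \<le> k" using dsing_spec[OF em(1)] em(2) by simp
  have "\<forall>e\<in>E. \<forall>d. hi < d \<longrightarrow> d \<le> k \<longrightarrow> f (vunit e d) \<le> F best"
  proof (intro ballI allI impI)
    fix e d assume e: "e \<in> E" and d: "hi < d" "d \<le> k"
    have "f (vunit e d) \<le> f (vunit e (fst (dsing f k \<alpha> e)))" using dsing_spec[OF e] d by blast
    also have "\<dots> = F (e, fst (dsing f k \<alpha> e))" by (simp add: F_def)
    also have "\<dots> \<le> F best" using fl e esE by (auto simp: cands_def)
    finally show "f (vunit e d) \<le> F best" .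
  qed
  then show ?thesis using fb em dk by (simp add: F_def)
qed

end



context drs begin

lemma main_approx:
  assumes esE: "set es = E" and dist: "distinct es" and ne: "es \<noteq> []"
  shows "drsmc_feasible E k (fst (fastdrsub f es k \<alpha>)) \<and>
    drsmc_opt E k f / (8 * ((2 - \<alpha>) / (1 - \<alpha>)) + 1 / \<alpha>) \<le> f (fst (fastdrsub f es k \<alpha>))"
proof -
  obtain x ox y oy c3 where s3: "step3 f k \<alpha> es (\<lambda>_. 0, [], \<lambda>_. 0, [], 0) = (x, ox, y, oy, c3)"
    by (cases "step3 f k \<alpha> es (\<lambda>_. 0, [], \<lambda>_. 0, [], 0)") auto
  have "inv ({} \<union> set es) x ox y oy"
    by (rule step3_inv[OF inv_init _ _ _ _ s3]) (use esE dist in auto)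
  then have I: "inv E x ox y oy" using esE by simp
  from I have sx: "supp_in E x" and sy: "supp_in E y" and bd: "\<forall>e. x e \<le> hi \<and> y e \<le> hi"
    and dox: "distinct ox" and oxE: "set ox \<subseteq> E" and posx: "\<forall>e. 0 < x e \<longrightarrow> e \<in> set ox"
    and px: "pfx x (filter (\<lambda>e. 0 < x e) ox)"
    and doy: "distinct oy" and oyE: "set oy \<subseteq> E" and posy: "\<forall>e. 0 < y e \<longrightarrow> e \<in> set oy"
    and py: "pfx y (filter (\<lambda>e. 0 < y e) oy)"
    unfolding inv_def by blast+
  have bdx: "\<forall>e. x e \<le> hi" and bdy: "\<forall>e. y e \<le> hi" using bd by auto
  define x' where "x' = trim k x ox"
  define y' where "y' = trim k y oy"
  have TX: "supp_in E x' \<and> (\<Sum>e\<in>E. x' e) \<le> k \<and> (\<forall>e\<in>E. x' e \<le> k) \<and> (1 - \<alpha>) * f x \<le> (2 - \<alpha>) * f x'"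
    unfolding x'_def by (rule trim_good[OF sx dox oxE posx bdx px])
  have TY: "supp_in E y' \<and> (\<Sum>e\<in>E. y' e) \<le> k \<and> (\<forall>e\<in>E. y' e \<le> k) \<and> (1 - \<alpha>) * f y \<le> (2 - \<alpha>) * f y'"
    unfolding y'_def by (rule trim_good[OF sy doy oyE posy bdy py])
  define em where "em = fst (fst (step1 f k \<alpha> es))"
  define dm where "dm = snd (fst (step1 f k \<alpha> es))"
  define m where "m = vunit em dm"
  have S1: "em \<in> E" "dm \<le> k" "\<forall>e\<in>E. \<forall>d. hi < d \<longrightarrow> d \<le> k \<longrightarrow> f (vunit e d) \<le> f m"
    using step1_spec[OF esE ne] unfolding em_def dm_def m_def by blast+
  define z where "z = (if f x' \<ge> f y' \<and> f x' \<ge> f m then x' else if f y' \<ge> f m then y' else m)"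
  have fz: "fst (fastdrsub f es k \<alpha>) = z"
    unfolding fastdrsub_def Let_def s3 z_def x'_def y'_def m_def em_def dm_def by simp
  have feasx: "drsmc_feasible E k x'" using TX by (simp add: drsmc_feasible_def)
  have feasy: "drsmc_feasible E k y'" using TY by (simp add: drsmc_feasible_def)
  have feasm: "drsmc_feasible E k m"
  proof -
    have "supp_in E m" using S1(1) by (auto simp: m_def vunit_def supp_in_def)
    moreover have "(\<Sum>e\<in>E. m e) = dm" using S1(1) finE by (simp add: m_def vunit_def)
    moreover have "\<forall>e\<in>E. m e \<le> k" using S1(2) by (simp add: m_def vunit_def)
    ultimately show ?thesis using S1(2) by (simp add: drsmc_feasible_def)
  qed
  have feasz: "drsmc_feasible E k z" using feasx feasy feasm by (simp add: z_def)
  have ge: "f x' \<le> f z" "f y' \<le> f z" "f m \<le> f z" by (auto simp: z_def)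
  have fz0: "0 \<le> f z" using feasz fnn by (simp add: drsmc_feasible_def)
  have a2: "0 \<le> 2 - \<alpha>" using alt1 by simp
  have tx: "(1 - \<alpha>) * f x \<le> (2 - \<alpha>) * f z"
    using TX mult_left_mono[OF ge(1) a2] by linarith
  have ty: "(1 - \<alpha>) * f y \<le> (2 - \<alpha>) * f z"
    using TY mult_left_mono[OF ge(2) a2] by linarith
  define K6 where "K6 = 6 * ((2 - \<alpha>) / (1 - \<alpha>)) + 1 / \<alpha>"
  define K8 where "K8 = 8 * ((2 - \<alpha>) / (1 - \<alpha>)) + 1 / \<alpha>"
  have bnd: "\<forall>w\<in>{w. drsmc_feasible E k w}. f w \<le> K6 * f z"
  proof
    fix w assume "w \<in> {w. drsmc_feasible E k w}"
    then have fw: "drsmc_feasible E k w" by simp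
    have big: "\<forall>e\<in>E. hi < w e \<longrightarrow> f (vunit e (w e)) \<le> f z"
      using S1(3) fw ge(3) by (force simp: drsmc_feasible_def)
    show "f w \<le> K6 * f z" unfolding K6_def by (rule bound_o[OF I fw tx ty big fz0])
  qed
  have fin: "finite {w. drsmc_feasible E k w}"
  proof (rule finite_subset)
    show "{w. drsmc_feasible E k w} \<subseteq> {g. \<forall>x. (x \<in> E \<longrightarrow> g x \<in> {0..k}) \<and> (x \<notin> E \<longrightarrow> g x = 0)}"
      by (auto simp: drsmc_feasible_def supp_in_def)
    show "finite {g. \<forall>x. (x \<in> E \<longrightarrow> g x \<in> {0..k}) \<and> (x \<notin> E \<longrightarrow> g x = (0::nat))}"
      by (rule finite_set_of_finite_funs[OF finE]) simp
  qed
  have nem: "(\<lambda>_. 0) \<in> {w. drsmc_feasible E k w}" by (simp add: drsmc_feasible_def)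
  have opt: "drsmc_opt E k f \<le> K6 * f z"
    unfolding drsmc_opt_def using fin nem bnd by (subst Max_le_iff) auto
  have r0: "0 \<le> (2 - \<alpha>) / (1 - \<alpha>)" using alt1 by simp
  have "K6 \<le> K8" unfolding K6_def K8_def using r0 by linarith
  then have K68: "K6 * f z \<le> K8 * f z" using fz0 by (rule mult_right_mono)
  have "0 < 1 / \<alpha>" using apos by simp
  then have K8p: "0 < K8" unfolding K8_def using r0 by linarith
  have "drsmc_opt E k f / K8 \<le> f z" using opt K68 K8p by (simp add: pos_divide_le_eq mult.commute)
  then show ?thesis using feasz fz unfolding K8_def by simp
qed

end



lemma const_id: "(let \<alpha> = (2 * sqrt 2 - 1) / 7 :: real
          in 1 / (8 * ((2 - \<alpha>) / (1 - \<alpha>)) + 1 / \<alpha>) = 1 / (17 + 4 * sqrt 2))"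
proof -
  define s where "s = sqrt (2::real)"
  have s2: "s * s = 2" unfolding s_def by simp
  have s1: "1 < s" unfolding s_def by (simp add: real_less_rsqrt)
  have s3: "s < 2"
  proof (rule ccontr)
    assume "\<not> s < 2"
    then have "2 * 2 \<le> s * s" by (intro mult_mono) auto
    then show False using s2 by simp
  qed
  define a where "a = (2 * s - 1) / 7"
  have a0: "0 < a" using s1 by (simp add: a_def)
  have a1: "a < 1" using s3 by (simp add: a_def)
  have e1: "(2 + s / 4) * (1 - a) = 2 - a"
    unfolding a_def apply (simp add: algebra_simps s2) apply (simp add: field_simps) done
  have q1: "(2 - a) / (1 - a) = 2 + s / 4" using e1 a1 by (simp add: field_simps)
  have e2: "(2 * s + 1) * a = 1" unfolding a_def by (simp add: algebra_simps s2)
  have q2: "1 / a = 2 * s + 1" using e2 a0 by (simp add: field_simps)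
  have "8 * ((2 - a) / (1 - a)) + 1 / a = 17 + 4 * s" unfolding q1 q2 by simp
  then show ?thesis unfolding Let_def a_def s_def by simp
qed

lemma ln2: "1/2 \<le> ln (2::real)"
proof -
  have "ln (1/2::real) \<le> 1/2 - 1" by (rule ln_le_minus_one) simp
  then show ?thesis by (simp add: ln_div)
qed

lemma sum_list_bound:
  assumes "\<And>e. real (g e) \<le> B"
  shows "real (sum_list (map g xs)) \<le> real (length xs) * B"
  using assms by (induction xs) (auto simp: algebra_simps add_mono)

lemma dsel_count:
  assumes "real (nat \<lfloor>\<alpha> * real k\<rfloor>) \<le> real k" "1 \<le> k"
  shows "real (snd (dsel f k \<alpha> v e)) \<le> 3 * (1 + log 2 (real k))"
proof -
  have "real (snd (bsearch (\<lambda>d. (f (vadd v e d) - f (vadd v e (d - 1)) \<ge> f v / real k, 3::nat))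
             0 (nat \<lfloor>\<alpha> * real k\<rfloor>))) \<le> real (3::nat) * (1 + log 2 (real k))"
    by (rule bsearch_count) (use assms in auto)
  then show ?thesis unfolding dsel_def by simp
qed

lemma dsing_count:
  assumes "1 \<le> k"
  shows "real (snd (dsing f k \<alpha> e)) \<le> 2 * (1 + log 2 (real k)) + 1"
proof -
  have "real (snd (bsearch (\<lambda>d. (f (vunit e d) \<ge> f (vunit e (d - 1)), 2::nat))
                      (nat \<lfloor>\<alpha> * real k\<rfloor> + 1) k)) \<le> real (2::nat) * (1 + log 2 (real k))"
    by (rule bsearch_count) (use assms in auto)
  then show ?thesis unfolding dsing_def Let_def by simp
qed

lemma step3_count:
  assumes h: "real (nat \<lfloor>\<alpha> * real k\<rfloor>) \<le> real k" "1 \<le> k"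
  shows "real (snd (snd (snd (snd (step3 f k \<alpha> es (x, ox, y, oy, c))))))
     \<le> real c + real (length es) * (6 * (1 + log 2 (real k)) + 4)"
proof (induction es arbitrary: x ox y oy c)
  case Nil then show ?case by simp
next
  case (Cons e es)
  let ?c = "c + snd (dsel f k \<alpha> x e) + snd (dsel f k \<alpha> y e) + 4"
  have cc: "real ?c \<le> real c + (6 * (1 + log 2 (real k)) + 4)"
    using dsel_count[OF h, of f x e] dsel_count[OF h, of f y e] by simp
  have "\<exists>x' ox' y' oy'. step3 f k \<alpha> (e # es) (x, ox, y, oy, c) = step3 f k \<alpha> es (x', ox', y', oy', ?c)"
    by (simp add: Let_def) blast
  then obtain x' ox' y' oy' where st: "step3 f k \<alpha> (e # es) (x, ox, y, oy, c) = step3 f k \<alpha> es (x', ox', y', oy', ?c)"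
    by blast
  have "real (snd (snd (snd (snd (step3 f k \<alpha> es (x', ox', y', oy', ?c))))))
     \<le> real ?c + real (length es) * (6 * (1 + log 2 (real k)) + 4)" by (rule Cons.IH)
  then show ?case unfolding st using cc by (simp add: algebra_simps)
qed


lemma count_main:
  assumes ne: "es \<noteq> []" and k: "0 < k" and a: "0 < \<alpha>" "\<alpha> < 1"
  shows "real (snd (fastdrsub f es k \<alpha>)) \<le> 16 * real (length es) * (1 + ln (real k))"
proof -
  have k1: "1 \<le> k" using k by simp
  have "real (nat \<lfloor>\<alpha> * real k\<rfloor>) = real_of_int \<lfloor>\<alpha> * real k\<rfloor>" using a by simp
  also have "\<dots> \<le> \<alpha> * real k" by simp
  also have "\<dots> \<le> 1 * real k" using a by (intro mult_right_mono) auto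
  finally have h: "real (nat \<lfloor>\<alpha> * real k\<rfloor>) \<le> real k" by simp
  define Lg where "Lg = log 2 (real k)"
  define n where "n = real (length es)"
  have n1: "1 \<le> n" using ne by (simp add: n_def Suc_le_eq)
  have Lg0: "0 \<le> Lg" using k1 by (simp add: Lg_def)
  have lnk: "0 \<le> ln (real k)" using k1 by simp
  have "Lg = ln (real k) / ln 2" by (simp add: Lg_def log_def)
  also have "\<dots> \<le> 2 * ln (real k)"
  proof -
    have "ln (real k) * 1 \<le> ln (real k) * (2 * ln 2)" using ln2 lnk by (intro mult_left_mono) auto
    then have "ln (real k) \<le> 2 * ln (real k) * ln 2" by (simp add: algebra_simps)
    then show ?thesis using ln2 by (simp add: divide_le_eq)
  qed
  finally have Lgl: "Lg \<le> 2 * ln (real k)" .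
  have s1: "real (snd (step1 f k \<alpha> es)) \<le> n * (2 * (1 + Lg) + 1)"
    unfolding step1_def Let_def n_def Lg_def using sum_list_bound[of "\<lambda>e. snd (dsing f k \<alpha> e)", OF dsing_count[OF k1]] by simp
  have s3: "real (snd (snd (snd (snd (step3 f k \<alpha> es (\<lambda>_. 0, [], \<lambda>_. 0, [], 0)))))) \<le> n * (6 * (1 + Lg) + 4)"
    using step3_count[OF h k1, of f es "\<lambda>_. 0" "[]" "\<lambda>_. 0" "[]" 0] by (simp add: n_def Lg_def)
  have eq: "snd (fastdrsub f es k \<alpha>) = snd (step1 f k \<alpha> es) + snd (snd (snd (snd (step3 f k \<alpha> es (\<lambda>_. 0, [], \<lambda>_. 0, [], 0))))) + 3"
    unfolding fastdrsub_def Let_def by simp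
  have "real (snd (fastdrsub f es k \<alpha>)) \<le> n * (2 * (1 + Lg) + 1) + n * (6 * (1 + Lg) + 4) + 3 * n"
    unfolding eq using s1 s3 n1 by simp
  also have "\<dots> = n * (16 + 8 * Lg)" by (simp add: algebra_simps)
  also have "\<dots> \<le> n * (16 + 16 * ln (real k))" using Lgl n1 by (intro mult_left_mono) auto
  also have "\<dots> = 16 * n * (1 + ln (real k))" by (simp add: algebra_simps)
  finally show ?thesis by (simp add: n_def)
qed

theorem theorem1:
  shows "(\<forall>(f :: 'a ivec \<Rightarrow> real) (es :: 'a list) (k :: nat) (\<alpha> :: real).
            distinct es \<and> es \<noteq> [] \<and> 0 < k \<and> 0 < \<alpha> \<and> \<alpha> < 1 \<and>
            nonneg_on (set es) f \<and> dr_submodular (set es) f \<longrightarrow>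
              drsmc_feasible (set es) k (fst (fastdrsub f es k \<alpha>)) \<and>
              f (fst (fastdrsub f es k \<alpha>))
                \<ge> drsmc_opt (set es) k f / (8 * ((2 - \<alpha>) / (1 - \<alpha>)) + 1 / \<alpha>))
       \<and> (\<exists>C :: real. \<forall>(f :: 'a ivec \<Rightarrow> real) (es :: 'a list) (k :: nat) (\<alpha> :: real).
            distinct es \<and> es \<noteq> [] \<and> 0 < k \<and> 0 < \<alpha> \<and> \<alpha> < 1 \<and>
            nonneg_on (set es) f \<and> dr_submodular (set es) f \<longrightarrow>
              real (snd (fastdrsub f es k \<alpha>)) \<le> C * real (length es) * (1 + ln (real k)))
       \<and> (let \<alpha> = (2 * sqrt 2 - 1) / 7 :: real
          in 1 / (8 * ((2 - \<alpha>) / (1 - \<alpha>)) + 1 / \<alpha>) = 1 / (17 + 4 * sqrt 2))"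
proof (intro conjI)
  show "\<forall>(f :: 'a ivec \<Rightarrow> real) (es :: 'a list) (k :: nat) (\<alpha> :: real).
            distinct es \<and> es \<noteq> [] \<and> 0 < k \<and> 0 < \<alpha> \<and> \<alpha> < 1 \<and>
            nonneg_on (set es) f \<and> dr_submodular (set es) f \<longrightarrow>
              drsmc_feasible (set es) k (fst (fastdrsub f es k \<alpha>)) \<and>
              f (fst (fastdrsub f es k \<alpha>))
                \<ge> drsmc_opt (set es) k f / (8 * ((2 - \<alpha>) / (1 - \<alpha>)) + 1 / \<alpha>)"
  proof (intro allI impI)
    fix f :: "'a ivec \<Rightarrow> real" and es :: "'a list" and k :: nat and \<alpha> :: real
    assume H: "distinct es \<and> es \<noteq> [] \<and> 0 < k \<and> 0 < \<alpha> \<and> \<alpha> < 1 \<and>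
            nonneg_on (set es) f \<and> dr_submodular (set es) f"
    interpret drs f "set es" k \<alpha> using H by unfold_locales auto
    show "drsmc_feasible (set es) k (fst (fastdrsub f es k \<alpha>)) \<and>
              f (fst (fastdrsub f es k \<alpha>)) \<ge> drsmc_opt (set es) k f / (8 * ((2 - \<alpha>) / (1 - \<alpha>)) + 1 / \<alpha>)"
      using main_approx[OF refl] H by blast
  qed
  show "\<exists>C :: real. \<forall>(f :: 'a ivec \<Rightarrow> real) (es :: 'a list) (k :: nat) (\<alpha> :: real).
            distinct es \<and> es \<noteq> [] \<and> 0 < k \<and> 0 < \<alpha> \<and> \<alpha> < 1 \<and>
            nonneg_on (set es) f \<and> dr_submodular (set es) f \<longrightarrow>
              real (snd (fastdrsub f es k \<alpha>)) \<le> C * real (length es) * (1 + ln (real k))"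
    by (rule exI[of _ 16]) (auto intro: count_main)
  show "let \<alpha> = (2 * sqrt 2 - 1) / 7 :: real
          in 1 / (8 * ((2 - \<alpha>) / (1 - \<alpha>)) + 1 / \<alpha>) = 1 / (17 + 4 * sqrt 2)"
    by (rule const_id)
qed


end
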